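(* If $\langle P\mid\Gamma\rangle$ is correct and $\langle P\mid\Gamma\rangle\rightarrow\langle P'\mid\Gamma'\rangle$, then $\langle P'\mid\Gamma'\rangle$ is also correct.
   Context: Write ⅋ for par and $\odot$ for the cut connective. A pre-proof graph with cuts $\langle P\mid\Gamma\rangle$ is an MLL linking tree $P$ with a sequent $\Gamma$ possibly containing cuts $A\odot A^\perp$ as roots, sharing the same leaves; it is correct if every switching (deleting one child edge per ⅋-node; $\odot$ behaves like $\otimes$) is connected and acyclic. The cut reduction relation $\rightarrow$ on pre-proof graphs is: $\langle P\mid(A⅋B)\odot(B^\perp\otimes A^\perp),\Gamma\rangle\to\langle P\mid A\odot A^\perp,B\odot B^\perp,\Gamma\rangle$; $\langle P[(a_h^\perp\otimes a_i)⅋(a_j^\perp\otimes a_k)]\mid a_i\odot a_j^\perp,\Gamma\rangle\to\langle P[a_h^\perp\otimes a_k]\mid\Gamma\rangle$; $\langle P[(Q\otimes\bot_i)⅋\mathsf1_j]\mid\bot_i\odot\mathsf1_j,\Gamma\rangle\to\langle P[Q]\mid\Gamma\rangle$. *)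

theory Defs
  imports "HOL-Library.Multiset"
begin

datatype 'a lit = Pos 'a | Neg 'a | One | Bot

fun neg_lit :: "'a lit \<Rightarrow> 'a lit" where
  "neg_lit (Pos a) = Neg a"
| "neg_lit (Neg a) = Pos a"
| "neg_lit One = Bot"
| "neg_lit Bot = One"

datatype conn = Tens | Par | CutC

(* trees whose leaves are labelled by (index, literal); the index identifies the leaf *)
datatype 'a ftree = Leaf nat "'a lit" | Node conn "'a ftree" "'a ftree"

fun cutfree :: "'a ftree \<Rightarrow> bool" where
  "cutfree (Leaf i l) = True"
| "cutfree (Node c A B) = (c \<noteq> CutC \<and> cutfree A \<and> cutfree B)"

fun leaves :: "'a ftree \<Rightarrow> (nat \<times> 'a lit) list" where
  "leaves (Leaf i l) = [(i, l)]"
| "leaves (Node c A B) = leaves A @ leaves B"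

(* is_dual A B: B is (a copy, with its own leaf indices, of) A^\<bottom>;
   (A \<otimes> B)^\<bottom> = B^\<bottom> \<parr> A^\<bottom> and (A \<parr> B)^\<bottom> = B^\<bottom> \<otimes> A^\<bottom> *)
fun is_dual :: "'a ftree \<Rightarrow> 'a ftree \<Rightarrow> bool" where
  "is_dual (Leaf i l) (Leaf j l') = (l' = neg_lit l)"
| "is_dual (Node Tens A B) (Node Par B' A') = (is_dual A A' \<and> is_dual B B')"
| "is_dual (Node Par A B) (Node Tens B' A') = (is_dual A A' \<and> is_dual B B')"
| "is_dual _ _ = False"

(* a pre-proof graph \<langle>P | \<Gamma>\<rangle>: P is a cut-free linking tree, \<Gamma> a sequent (list, order irrelevant)
   whose roots are formulas or cuts A \<odot> A^\<bottom>; P and \<Gamma> share exactly the same leaves *)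
definition pre_proof_graph :: "'a ftree \<Rightarrow> 'a ftree list \<Rightarrow> bool" where
  "pre_proof_graph P \<Gamma> \<longleftrightarrow>
     cutfree P \<and>
     (\<forall>F \<in> set \<Gamma>. cutfree F \<or> (\<exists>A B. F = Node CutC A B \<and> cutfree A \<and> cutfree B \<and> is_dual A B)) \<and>
     distinct (map fst (leaves P)) \<and>
     mset (leaves P) = mset (concat (map leaves \<Gamma>))"

(* vertices: internal nodes of P (by position), internal nodes of the k-th root of \<Gamma>
   (by position), and the shared leaves (by index) *)
datatype vtx = VP "bool list" | VG nat "bool list" | VL nat

fun troot :: "(bool list \<Rightarrow> vtx) \<Rightarrow> bool list \<Rightarrow> 'a ftree \<Rightarrow> vtx" where
  "troot f p (Leaf i l) = VL i"
| "troot f p (Node c A B) = f p"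

fun tverts :: "(bool list \<Rightarrow> vtx) \<Rightarrow> bool list \<Rightarrow> 'a ftree \<Rightarrow> vtx set" where
  "tverts f p (Leaf i l) = {VL i}"
| "tverts f p (Node c A B) = {f p} \<union> tverts f (p @ [False]) A \<union> tverts f (p @ [True]) B"

fun tedges :: "(vtx \<Rightarrow> bool) \<Rightarrow> (bool list \<Rightarrow> vtx) \<Rightarrow> bool list \<Rightarrow> 'a ftree \<Rightarrow> vtx set set" where
  "tedges s f p (Leaf i l) = {}"
| "tedges s f p (Node c A B) =
     (let eA = {f p, troot f (p @ [False]) A}; eB = {f p, troot f (p @ [True]) B}
      in (if c = Par then (if s (f p) then {eB} else {eA}) else {eA, eB}))
     \<union> tedges s f (p @ [False]) A \<union> tedges s f (p @ [True]) B"

definition graph_verts :: "'a ftree \<Rightarrow> 'a ftree list \<Rightarrow> vtx set" where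
  "graph_verts P \<Gamma> = tverts VP [] P \<union> (\<Union>k<length \<Gamma>. tverts (VG k) [] (\<Gamma> ! k))"

definition switch_edges :: "(vtx \<Rightarrow> bool) \<Rightarrow> 'a ftree \<Rightarrow> 'a ftree list \<Rightarrow> vtx set set" where
  "switch_edges s P \<Gamma> = tedges s VP [] P \<union> (\<Union>k<length \<Gamma>. tedges s (VG k) [] (\<Gamma> ! k))"

definition ug_connected :: "vtx set \<Rightarrow> vtx set set \<Rightarrow> bool" where
  "ug_connected V E \<longleftrightarrow> (\<forall>u\<in>V. \<forall>v\<in>V. (u, v) \<in> {(x, y). {x, y} \<in> E}\<^sup>*)"

definition ug_cycle :: "vtx set set \<Rightarrow> vtx list \<Rightarrow> bool" where
  "ug_cycle E vs \<longleftrightarrow> length vs \<ge> 3 \<and> distinct vs \<and>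
     (\<forall>i < length vs. {vs ! i, vs ! ((i + 1) mod length vs)} \<in> E)"

definition ug_acyclic :: "vtx set set \<Rightarrow> bool" where
  "ug_acyclic E \<longleftrightarrow> \<not> (\<exists>vs. ug_cycle E vs)"

definition correct :: "'a ftree \<Rightarrow> 'a ftree list \<Rightarrow> bool" where
  "correct P \<Gamma> \<longleftrightarrow> pre_proof_graph P \<Gamma> \<and>
     (\<forall>s. ug_connected (graph_verts P \<Gamma>) (switch_edges s P \<Gamma>) \<and> ug_acyclic (switch_edges s P \<Gamma>))"

datatype 'a ctx = Hole | CL conn "'a ctx" "'a ftree" | CR conn "'a ftree" "'a ctx"

fun plug :: "'a ctx \<Rightarrow> 'a ftree \<Rightarrow> 'a ftree" where
  "plug Hole T = T"
| "plug (CL c C B) T = Node c (plug C T) B"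
| "plug (CR c A C) T = Node c A (plug C T)"

inductive cut_red :: "'a ftree \<Rightarrow> 'a ftree list \<Rightarrow> 'a ftree \<Rightarrow> 'a ftree list \<Rightarrow> bool" where
  mult: "mset \<Gamma> = add_mset (Node CutC (Node Par A B) (Node Tens B' A')) (mset \<Delta>) \<Longrightarrow>
         mset \<Gamma>' = add_mset (Node CutC A A') (add_mset (Node CutC B B') (mset \<Delta>)) \<Longrightarrow>
         cut_red P \<Gamma> P \<Gamma>'"
| atom: "P = plug C (Node Par (Node Tens (Leaf h (Neg a)) (Leaf i (Pos a)))
                              (Node Tens (Leaf j (Neg a)) (Leaf k (Pos a)))) \<Longrightarrow>
         mset \<Gamma> = add_mset (Node CutC (Leaf i (Pos a)) (Leaf j (Neg a))) (mset \<Delta>) \<Longrightarrow>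
         P' = plug C (Node Tens (Leaf h (Neg a)) (Leaf k (Pos a))) \<Longrightarrow>
         cut_red P \<Gamma> P' \<Delta>"
| unit: "P = plug C (Node Par (Node Tens Q (Leaf i Bot)) (Leaf j One)) \<Longrightarrow>
         mset \<Gamma> = add_mset (Node CutC (Leaf i Bot) (Leaf j One)) (mset \<Delta>) \<Longrightarrow>
         cut_red P \<Gamma> (plug C Q) \<Delta>"

end

theory Submission
  imports Defs "HOL-Library.Transitive_Closure_Table" "HOL-Library.Sublist" "HOL-Combinatorics.Permutations"
begin

definition ER :: "'v set set \<Rightarrow> ('v \<times> 'v) set" where
  "ER E = {(x, y). {x, y} \<in> E}"

abbreviation conn :: "'v set set \<Rightarrow> 'v \<Rightarrow> 'v \<Rightarrow> bool" where
  "conn E x y \<equiv> (x, y) \<in> (ER E)\<^sup>*"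

lemma ER_iff[simp]: "(x, y) \<in> ER E \<longleftrightarrow> {x, y} \<in> E"
  by (simp add: ER_def)

lemma conn_edge: "{x, y} \<in> E \<Longrightarrow> conn E x y"
  by (simp add: r_into_rtrancl)

lemma conn_sym: "conn E x y \<Longrightarrow> conn E y x"
proof (induction rule: rtrancl_induct)
  case base then show ?case by simp
next
  case (step y z)
  then have "(z, y) \<in> ER E" by (simp add: insert_commute)
  then show ?case using step.IH by (meson converse_rtrancl_into_rtrancl)
qed

lemma conn_trans: "conn E x y \<Longrightarrow> conn E y z \<Longrightarrow> conn E x z"
  by (rule rtrancl_trans)

lemma conn_mono: "conn E x y \<Longrightarrow> E \<subseteq> F \<Longrightarrow> conn F x y"
proof -
  assume a: "conn E x y" "E \<subseteq> F"
  have "ER E \<subseteq> ER F" using a(2) by (auto simp: ER_def)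
  then show ?thesis using a(1) rtrancl_mono by blast
qed

lemma conn_map:
  assumes "\<And>x y. {x, y} \<in> E \<Longrightarrow> conn F (\<phi> x) (\<phi> y)"
  and "conn E u v"
  shows "conn F (\<phi> u) (\<phi> v)"
  using assms(2)
proof (induction rule: rtrancl_induct)
  case base then show ?case by simp
next
  case (step y z)
  then have "{y, z} \<in> E" by simp
  then have "conn F (\<phi> y) (\<phi> z)" by (rule assms(1))
  then show ?case using step.IH by (rule conn_trans[rotated])
qed

definition bridges :: "'v set set \<Rightarrow> bool" where
  "bridges E \<longleftrightarrow> (\<forall>x y. {x, y} \<in> E \<longrightarrow> x \<noteq> y \<longrightarrow> \<not> conn (E - {{x, y}}) x y)"

lemma rtrancl_path_conn:
  "rtrancl_path (\<lambda>a b. (a, b) \<in> R) x xs y \<Longrightarrow> (x, y) \<in> R\<^sup>*"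
  by (induction rule: rtrancl_path.induct) (auto intro: converse_rtrancl_into_rtrancl)

lemma conn_rtrancl_path:
  assumes "(x, y) \<in> R\<^sup>*"
  shows "\<exists>xs. rtrancl_path (\<lambda>a b. (a, b) \<in> R) x xs y"
proof -
  have "(\<lambda>a b. (a, b) \<in> R)\<^sup>*\<^sup>* x y" using assms by (simp add: rtrancl_def)
  then show ?thesis by (simp add: rtranclp_eq_rtrancl_path)
qed

lemma acyclic_imp_bridges:
  assumes "ug_acyclic E"
  shows "bridges E"
  unfolding bridges_def
proof (intro allI impI notI)
  fix x y
  assume e: "{x, y} \<in> E" and xy: "x \<noteq> y" and c: "conn (E - {{x, y}}) x y"
  have "\<exists>xs. rtrancl_path (\<lambda>a b. (a, b) \<in> ER (E - {{x, y}})) y xs x"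
    by (rule conn_rtrancl_path[OF conn_sym[OF c]])
  then obtain xs where p: "rtrancl_path (\<lambda>a b. (a, b) \<in> ER (E - {{x, y}})) y xs x" ..
  obtain ys where p2: "rtrancl_path (\<lambda>a b. (a, b) \<in> ER (E - {{x, y}})) y ys x"
      and d: "distinct (y # ys)" and "set ys \<subseteq> set xs"
    by (rule rtrancl_path_distinct[OF p])
  have ysne: "ys \<noteq> []"
  proof
    assume "ys = []"
    with p2 have "y = x" by (auto elim: rtrancl_path.cases)
    with xy show False by simp
  qed
  have lst: "last ys = x" using rtrancl_path_last[OF p2 ysne] .
  have ys1: "ys \<noteq> [x]"
  proof
    assume "ys = [x]"
    then have "(y, x) \<in> ER (E - {{x, y}})" using rtrancl_path_nth[OF p2, of 0] by simp
    then show False by (simp add: insert_commute)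
  qed
  define vs where "vs = y # ys"
  have len: "length vs \<ge> 3"
  proof -
    obtain z zs where z: "ys = z # zs" using ysne by (cases ys) auto
    have "zs \<noteq> []" using z ys1 lst by auto
    then show ?thesis using z vs_def by (cases zs) auto
  qed
  have "ug_cycle E vs"
    unfolding ug_cycle_def
  proof (intro conjI allI impI)
    show "3 \<le> length vs" by (rule len)
    show "distinct vs" using d vs_def by simp
    fix i assume i: "i < length vs"
    show "{vs ! i, vs ! ((i + 1) mod length vs)} \<in> E"
    proof (cases "i + 1 < length vs")
      case True
      then have "i < length ys" using vs_def by simp
      from rtrancl_path_nth[OF p2 this] have "{vs ! i, ys ! i} \<in> E" by (simp add: vs_def)
      moreover have "vs ! ((i + 1) mod length vs) = ys ! i" using True vs_def by simp
      ultimately show ?thesis by simp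
    next
      case False
      then have ii: "i = length ys" using i vs_def by simp
      have "vs ! i = x" using ii lst ysne vs_def by (simp add: last_conv_nth)
      moreover have "(i + 1) mod length vs = 0" using ii vs_def by simp
      ultimately show ?thesis using e vs_def by (simp add: insert_commute)
    qed
  qed
  then show False using assms ug_acyclic_def by blast
qed

lemma bridges_imp_acyclic:
  assumes "bridges E"
  shows "ug_acyclic E"
  unfolding ug_acyclic_def
proof
  assume "\<exists>vs. ug_cycle E vs"
  then obtain vs where cy: "ug_cycle E vs" by blast
  define n where "n = length vs"
  have n3: "n \<ge> 3" and d: "distinct vs" and ed: "\<And>i. i < n \<Longrightarrow> {vs ! i, vs ! ((i + 1) mod n)} \<in> E"
    using cy unfolding ug_cycle_def n_def by auto
  define x where "x = vs ! 0"
  define y where "y = vs ! 1"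
  have e: "{x, y} \<in> E" using ed[of 0] n3 by (simp add: x_def y_def)
  have dd: "vs ! i \<noteq> vs ! j" if "i < n" "j < n" "i \<noteq> j" for i j
    using d that nth_eq_iff_index_eq unfolding n_def by blast
  have xy: "x \<noteq> y" using dd[of 0 1] n3 unfolding x_def y_def by simp
  have notin: "\<And>i. 2 \<le> i \<Longrightarrow> i < n \<Longrightarrow> vs ! i \<noteq> x \<and> vs ! i \<noteq> y"
    using dd n3 unfolding x_def y_def by simp
  have step: "conn (E - {{x, y}}) y (vs ! k)" if "1 \<le> k" "k < n" for k
    using that
  proof (induction k)
    case 0 then show ?case by simp
  next
    case (Suc k)
    show ?case
    proof (cases "k = 0")
      case True then show ?thesis by (simp add: y_def)
    next
      case False
      then have ih: "conn (E - {{x, y}}) y (vs ! k)" using Suc by simp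
      have "{vs ! k, vs ! (Suc k)} \<in> E" using ed[of k] Suc by simp
      moreover have "{vs ! k, vs ! (Suc k)} \<noteq> {x, y}"
      proof -
        have "2 \<le> Suc k" "Suc k < n" using False Suc.prems by auto
        then have "vs ! Suc k \<noteq> x \<and> vs ! Suc k \<noteq> y" by (rule notin)
        then show ?thesis by (auto simp: doubleton_eq_iff)
      qed
      ultimately have "{vs ! k, vs ! (Suc k)} \<in> E - {{x, y}}" by simp
      then have "conn (E - {{x, y}}) (vs ! k) (vs ! Suc k)" by (rule conn_edge)
      with ih show ?thesis by (rule conn_trans)
    qed
  qed
  have a: "conn (E - {{x, y}}) y (vs ! (n - 1))" using step[of "n - 1"] n3 by simp
  have "{vs ! (n - 1), x} \<in> E" using ed[of "n - 1"] n3 by (simp add: x_def)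
  moreover have "{vs ! (n - 1), x} \<noteq> {x, y}" using notin[of "n - 1"] n3 by (auto simp: doubleton_eq_iff)
  ultimately have "conn (E - {{x, y}}) (vs ! (n - 1)) x" by (intro conn_edge) simp
  with a have "conn (E - {{x, y}}) y x" by (rule conn_trans)
  then have "conn (E - {{x, y}}) x y" by (rule conn_sym)
  then show False using assms e xy unfolding bridges_def by blast
qed

lemma acyclic_iff_bridges: "ug_acyclic E \<longleftrightarrow> bridges E"
  using acyclic_imp_bridges bridges_imp_acyclic by blast

definition imgE :: "('v \<Rightarrow> 'w) \<Rightarrow> 'v set set \<Rightarrow> 'w set set" where
  "imgE \<phi> E = {\<phi> ` e | e. e \<in> E \<and> (\<forall>z. \<phi> ` e \<noteq> {z})}"

definition wfE :: "'v set \<Rightarrow> 'v set set \<Rightarrow> bool" where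
  "wfE V E \<longleftrightarrow> (\<forall>e\<in>E. \<exists>x y. e = {x, y} \<and> x \<in> V \<and> y \<in> V)"

definition tree :: "vtx set \<Rightarrow> vtx set set \<Rightarrow> bool" where
  "tree V E \<longleftrightarrow> ug_connected V E \<and> bridges E"

lemma ug_connectedD: "ug_connected V E \<Longrightarrow> x \<in> V \<Longrightarrow> y \<in> V \<Longrightarrow> conn E x y"
  unfolding ug_connected_def ER_def by blast

lemma ug_connectedI: "(\<And>x y. x \<in> V \<Longrightarrow> y \<in> V \<Longrightarrow> conn E x y) \<Longrightarrow> ug_connected V E"
  unfolding ug_connected_def ER_def by blast

lemma bridgesD: "bridges E \<Longrightarrow> {x, y} \<in> E \<Longrightarrow> x \<noteq> y \<Longrightarrow> \<not> conn (E - {{x, y}}) x y"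
  unfolding bridges_def by blast

lemma imgE_memI: "{x, y} \<in> E \<Longrightarrow> \<phi> x \<noteq> \<phi> y \<Longrightarrow> {\<phi> x, \<phi> y} \<in> imgE \<phi> E"
  unfolding imgE_def by (rule CollectI, rule exI[of _ "{x, y}"]) (auto simp: doubleton_eq_iff)

lemma conn_img:
  assumes "conn E u v"
  shows "conn (imgE \<phi> E) (\<phi> u) (\<phi> v)"
proof (rule conn_map[OF _ assms])
  fix x y assume "{x, y} \<in> E"
  then show "conn (imgE \<phi> E) (\<phi> x) (\<phi> y)"
    by (cases "\<phi> x = \<phi> y") (auto intro: conn_edge imgE_memI)
qed

lemma lift_conn:
  assumes wf: "wfE V E"
    and fib: "\<And>x y. x \<in> V \<Longrightarrow> y \<in> V \<Longrightarrow> \<phi> x = \<phi> y \<Longrightarrow> conn {e\<in>E. \<exists>z. \<phi> ` e = {z}} x y"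
    and e: "e \<in> E" "\<forall>z. \<phi> ` e \<noteq> {z}"
    and c: "conn (imgE \<phi> E - {\<phi> ` e}) a' b'"
  shows "\<forall>a\<in>V. \<forall>b\<in>V. \<phi> a = a' \<longrightarrow> \<phi> b = b' \<longrightarrow> conn (E - {e}) a b"
  using c
proof (induction rule: rtrancl_induct)
  case base
  have sub: "{e\<in>E. \<exists>z. \<phi> ` e = {z}} \<subseteq> E - {e}" using e by auto
  show ?case
  proof (intro ballI impI)
    fix a b assume "a \<in> V" "b \<in> V" "\<phi> a = a'" "\<phi> b = a'"
    then have "conn {e\<in>E. \<exists>z. \<phi> ` e = {z}} a b" using fib by simp
    then show "conn (E - {e}) a b" using sub by (rule conn_mono)
  qed
next
  case (step m' b')
  have sub: "{e\<in>E. \<exists>z. \<phi> ` e = {z}} \<subseteq> E - {e}" using e by auto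
  from step.hyps(2) have mb: "{m', b'} \<in> imgE \<phi> E - {\<phi> ` e}" by (simp only: ER_iff)
  then have "{m', b'} \<in> imgE \<phi> E" "{m', b'} \<noteq> \<phi> ` e" by blast+
  then obtain e2 where e2: "e2 \<in> E" "\<phi> ` e2 = {m', b'}" unfolding imgE_def by blast
  then have ne: "e2 \<noteq> e" using \<open>{m', b'} \<noteq> \<phi> ` e\<close> by auto
  obtain u w where uw: "e2 = {u, w}" "u \<in> V" "w \<in> V" using wf e2(1) unfolding wfE_def by blast
  obtain m z where mz: "e2 = {m, z}" "\<phi> m = m'" "\<phi> z = b'" "m \<in> V" "z \<in> V"
  proof (cases "\<phi> u = m'")
    case True
    then have "\<phi> w = b'" using e2(2) uw(1) by (auto simp: doubleton_eq_iff)
    then show ?thesis using that[of u w] True uw by simp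
  next
    case False
    then have "\<phi> w = m'" "\<phi> u = b'" using e2(2) uw(1) by (auto simp: doubleton_eq_iff)
    then show ?thesis using that[of w u] uw by (simp add: insert_commute)
  qed
  show ?case
  proof (intro ballI impI)
    fix a b assume ab: "a \<in> V" "b \<in> V" "\<phi> a = a'" "\<phi> b = b'"
    have 1: "conn (E - {e}) a m" using step.IH ab mz by blast
    have "{m, z} \<in> E - {e}" using mz e2 ne by simp
    then have 2: "conn (E - {e}) m z" by (rule conn_edge)
    have "conn {e\<in>E. \<exists>z. \<phi> ` e = {z}} z b" using fib mz ab by simp
    then have 3: "conn (E - {e}) z b" using sub by (rule conn_mono)
    show "conn (E - {e}) a b" using conn_trans[OF conn_trans[OF 1 2] 3] .
  qed
qed

lemma contract:
  assumes tr: "tree V E" and wf: "wfE V E"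
    and fib: "\<And>x y. x \<in> V \<Longrightarrow> y \<in> V \<Longrightarrow> \<phi> x = \<phi> y \<Longrightarrow> conn {e\<in>E. \<exists>z. \<phi> ` e = {z}} x y"
  shows "tree (\<phi> ` V) (imgE \<phi> E)"
  unfolding tree_def
proof
  show "ug_connected (\<phi> ` V) (imgE \<phi> E)"
  proof (rule ug_connectedI)
    fix x' y' assume "x' \<in> \<phi> ` V" "y' \<in> \<phi> ` V"
    then obtain x y where "x \<in> V" "y \<in> V" "x' = \<phi> x" "y' = \<phi> y" by blast
    moreover have "conn E x y" using tr calculation unfolding tree_def by (blast intro: ug_connectedD)
    then have "conn (imgE \<phi> E) (\<phi> x) (\<phi> y)" by (rule conn_img)
    ultimately show "conn (imgE \<phi> E) x' y'" by simp
  qed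
next
  show "bridges (imgE \<phi> E)"
    unfolding bridges_def
  proof (intro allI impI notI)
    fix x' y' assume e': "{x', y'} \<in> imgE \<phi> E" and ne: "x' \<noteq> y'"
      and c: "conn (imgE \<phi> E - {{x', y'}}) x' y'"
    from e' obtain e where e: "e \<in> E" "\<phi> ` e = {x', y'}" unfolding imgE_def by auto
    have nc: "\<forall>z. \<phi> ` e \<noteq> {z}" using e ne by (auto simp: doubleton_eq_iff)
    obtain u w where uw: "e = {u, w}" "u \<in> V" "w \<in> V" using wf e(1) unfolding wfE_def by blast
    obtain x y where xy: "e = {x, y}" "\<phi> x = x'" "\<phi> y = y'" "x \<in> V" "y \<in> V"
    proof (cases "\<phi> u = x'")
      case True
      then have "\<phi> w = y'" using e(2) uw(1) ne by (auto simp: doubleton_eq_iff)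
      then show ?thesis using that[of u w] True uw by simp
    next
      case False
      then have "\<phi> w = x'" "\<phi> u = y'" using e(2) uw(1) by (auto simp: doubleton_eq_iff)
      then show ?thesis using that[of w u] uw by (simp add: insert_commute)
    qed
    have "conn (imgE \<phi> E - {\<phi> ` e}) x' y'" using c e(2) by simp
    from lift_conn[OF wf fib e(1) nc this] xy have "conn (E - {e}) x y" by blast
    moreover have "x \<noteq> y" using xy ne by auto
    moreover have "bridges E" using tr unfolding tree_def by simp
    ultimately show False using bridgesD[of E x y] xy e(1) by simp
  qed
qed

lemma first_use:
  assumes "conn T z y"
  shows "conn (T - {{u, v}}) z y \<or> conn (T - {{u, v}}) z u \<or> conn (T - {{u, v}}) z v"
  using assms
proof (induction rule: rtrancl_induct)
  case base then show ?case by simp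
next
  case (step m y)
  then have my: "{m, y} \<in> T" by simp
  show ?case
  proof (cases "{m, y} = {u, v}")
    case True
    then have "m = u \<or> m = v" by (auto simp: doubleton_eq_iff)
    then show ?thesis using step.IH by blast
  next
    case False
    then have "conn (T - {{u, v}}) m y" using my by (intro conn_edge) simp
    then show ?thesis using step.IH rtrancl_trans[of z m _ y] by blast
  qed
qed

lemma exchange:
  assumes tr: "tree V T" and wf: "wfE V T" and uv: "{u, v} \<in> T" "u \<noteq> v" "u \<in> V" "v \<in> V"
    and w: "w \<in> V" "conn (T - {{u, v}}) w u"
  shows "tree V (T - {{u, v}} \<union> {{w, v}})" "wfE V (T - {{u, v}} \<union> {{w, v}})"
proof -
  define T0 where "T0 = T - {{u, v}}"
  define T' where "T' = T0 \<union> {{w, v}}"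
  have con: "ug_connected V T" and br: "bridges T" using tr unfolding tree_def by auto
  have nuv: "\<not> conn T0 u v" using bridgesD[OF br uv(1,2)] T0_def by simp
  have side: "conn T0 z u \<or> conn T0 z v" if "z \<in> V" for z
    using first_use[OF ug_connectedD[OF con that uv(3)], of u v] unfolding T0_def
    by blast
  have wu: "conn T0 w u" using w T0_def by simp
  have sub: "T0 \<subseteq> T'" "T0 \<subseteq> T" unfolding T'_def T0_def by auto
  have uv': "conn T' u v"
  proof -
    have "conn T' u w" using conn_mono[OF conn_sym[OF wu] sub(1)] .
    moreover have "conn T' w v" unfolding T'_def by (rule conn_edge) simp
    ultimately show ?thesis by (rule conn_trans)
  qed
  have tou: "conn T' z u" if "z \<in> V" for z
  proof -
    from side[OF that] show ?thesis
    proof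
      assume "conn T0 z u" then show ?thesis using sub(1) by (rule conn_mono)
    next
      assume "conn T0 z v" then have "conn T' z v" using sub(1) by (rule conn_mono)
      then show ?thesis using conn_sym[OF uv'] by (rule conn_trans)
    qed
  qed
  show "wfE V (T - {{u, v}} \<union> {{w, v}})" using wf w uv unfolding wfE_def by auto
  have "ug_connected V T'"
  proof (rule ug_connectedI)
    fix x y assume xy: "x \<in> V" "y \<in> V"
    from tou[OF xy(1)] conn_sym[OF tou[OF xy(2)]] show "conn T' x y" by (rule conn_trans)
  qed
  moreover have "bridges T'"
    unfolding bridges_def
  proof (intro allI impI notI)
    fix x y assume xyT: "{x, y} \<in> T'" and xy: "x \<noteq> y" and c: "conn (T' - {{x, y}}) x y"
    show False
    proof (cases "{x, y} = {w, v}")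
      case True
      have "T' - {{x, y}} \<subseteq> T0" unfolding T'_def using True by auto
      with c have "conn T0 x y" by (rule conn_mono)
      then have "conn T0 w v" using True by (auto simp: doubleton_eq_iff dest: conn_sym)
      then have "conn T0 u v" using conn_sym[OF wu] by (rule conn_trans[rotated])
      then show False using nuv by simp
    next
      case False
      then have xyT0: "{x, y} \<in> T0" using xyT T'_def by auto
      then have xyT1: "{x, y} \<in> T" using T0_def by simp
      have same: "conn T0 a u \<longleftrightarrow> conn T0 b u" if "{a, b} \<in> T0" for a b
      proof -
        have "conn T0 a b" using that by (rule conn_edge)
        show ?thesis
        proof
          assume "conn T0 a u" then show "conn T0 b u" using conn_sym[OF \<open>conn T0 a b\<close>] by (rule conn_trans[rotated])
        next
          assume "conn T0 b u" then show "conn T0 a u" using \<open>conn T0 a b\<close> by (rule conn_trans[rotated])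
        qed
      qed
      have vnot: "\<not> conn T0 v u"
      proof
        assume "conn T0 v u" then have "conn T0 u v" by (rule conn_sym)
        with nuv show False by simp
      qed
      define S where "S = {z. conn T0 z u}"
      have wS: "w \<in> S" using wu S_def by simp
      have vS: "v \<notin> S" using vnot S_def by simp
      have xyS: "x \<in> S \<longleftrightarrow> y \<in> S" using same[OF xyT0] S_def by simp
      show False
      proof (cases "x \<in> S")
        case True
        define \<phi> where "\<phi> z = (if z \<in> S then z else w)" for z
        have "conn (T - {{x, y}}) (\<phi> x) (\<phi> y)"
        proof (rule conn_map[OF _ c])
          fix a b assume ab: "{a, b} \<in> T' - {{x, y}}"
          show "conn (T - {{x, y}}) (\<phi> a) (\<phi> b)"
          proof (cases "{a, b} = {w, v}")
            case True
            then have "(a = w \<and> b = v) \<or> (a = v \<and> b = w)" by (simp add: doubleton_eq_iff)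
            then have "\<phi> a = \<phi> b" using wS vS unfolding \<phi>_def by auto
            then show ?thesis by simp
          next
            case False
            then have abT0: "{a, b} \<in> T0" "{a, b} \<noteq> {x, y}" using ab T'_def by auto
            then have "a \<in> S \<longleftrightarrow> b \<in> S" using same S_def by simp
            moreover have "{a, b} \<in> T - {{x, y}}" using abT0 T0_def by simp
            ultimately have "\<phi> a = \<phi> b \<or> (\<phi> a = a \<and> \<phi> b = b)" unfolding \<phi>_def by auto
            then show ?thesis
            proof
              assume "\<phi> a = \<phi> b" then show ?thesis by simp
            next
              assume "\<phi> a = a \<and> \<phi> b = b"
              then show ?thesis using conn_edge[OF \<open>{a, b} \<in> T - {{x, y}}\<close>] by simp
            qed
          qed
        qed
        then have "conn (T - {{x, y}}) x y" using True xyS by (simp add: \<phi>_def)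
        then show False using bridgesD[OF br xyT1 xy] by simp
      next
        case False
        define \<phi> where "\<phi> z = (if z \<in> S then v else z)" for z
        have "conn (T - {{x, y}}) (\<phi> x) (\<phi> y)"
        proof (rule conn_map[OF _ c])
          fix a b assume ab: "{a, b} \<in> T' - {{x, y}}"
          show "conn (T - {{x, y}}) (\<phi> a) (\<phi> b)"
          proof (cases "{a, b} = {w, v}")
            case True
            then have "(a = w \<and> b = v) \<or> (a = v \<and> b = w)" by (simp add: doubleton_eq_iff)
            then have "\<phi> a = \<phi> b" using wS vS unfolding \<phi>_def by auto
            then show ?thesis by simp
          next
            case False
            then have abT0: "{a, b} \<in> T0" "{a, b} \<noteq> {x, y}" using ab T'_def by auto
            then have "a \<in> S \<longleftrightarrow> b \<in> S" using same S_def by simp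
            moreover have "{a, b} \<in> T - {{x, y}}" using abT0 T0_def by simp
            ultimately have "\<phi> a = \<phi> b \<or> (\<phi> a = a \<and> \<phi> b = b)" unfolding \<phi>_def by auto
            then show ?thesis
            proof
              assume "\<phi> a = \<phi> b" then show ?thesis by simp
            next
              assume "\<phi> a = a \<and> \<phi> b = b"
              then show ?thesis using conn_edge[OF \<open>{a, b} \<in> T - {{x, y}}\<close>] by simp
            qed
          qed
        qed
        then have "conn (T - {{x, y}}) x y" using False xyS by (simp add: \<phi>_def)
        then show False using bridgesD[OF br xyT1 xy] by simp
      qed
    qed
  qed
  ultimately show "tree V (T - {{u, v}} \<union> {{w, v}})" unfolding tree_def T'_def T0_def by simp
qed

lemma first_entry:
  assumes c: "conn (H \<union> G) x y" and y: "y \<in> S" and HS: "\<forall>e\<in>H. e \<inter> S = {}"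
  shows "x \<notin> S \<longrightarrow> (\<exists>e\<in>G. \<exists>q\<in>e. q \<notin> S \<and> conn H x q)"
  using c
proof (induction rule: converse_rtrancl_induct)
  case base then show ?case using y by simp
next
  case (step x m)
  then have xm: "{x, m} \<in> H \<union> G" by simp
  show ?case
  proof
    assume xS: "x \<notin> S"
    show "\<exists>e\<in>G. \<exists>q\<in>e. q \<notin> S \<and> conn H x q"
    proof (cases "{x, m} \<in> G")
      case True
      have "conn H x x" by simp
      then show ?thesis using True xS by blast
    next
      case False
      then have xmH: "{x, m} \<in> H" using xm by simp
      have "{x, m} \<inter> S = {}" using HS xmH by (rule bspec)
      then have "m \<notin> S" by auto
      then obtain e q where eq: "e \<in> G" "q \<in> e" "q \<notin> S" "conn H m q" using step.IH by blast
      have "conn H x m" using xmH by (rule conn_edge)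
      then have "conn H x q" using eq(4) by (rule conn_trans)
      then show ?thesis using eq by blast
    qed
  qed
qed

lemma wfE_E:
  assumes "wfE V E" "e \<in> E"
  obtains x y where "e = {x, y}" "x \<in> V" "y \<in> V"
proof -
  have "\<exists>x y. e = {x, y} \<and> x \<in> V \<and> y \<in> V" using assms unfolding wfE_def by (rule bspec)
  then show ?thesis using that by (elim exE conjE)
qed
lemma wfE_insert: "wfE V E \<Longrightarrow> x \<in> V \<Longrightarrow> y \<in> V \<Longrightarrow> wfE V (insert {x, y} E)"
  unfolding wfE_def by auto
lemma wfE_Un: "wfE V A \<Longrightarrow> wfE V B \<Longrightarrow> wfE V (A \<union> B)"
  unfolding wfE_def by (simp add: ball_Un)
lemma wfE_mono: "wfE V E \<Longrightarrow> V \<subseteq> W \<Longrightarrow> wfE W E"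
  unfolding wfE_def by (meson subsetD)

lemma wfE_empty: "wfE V {}"
  unfolding wfE_def by simp

lemma swap_edge: "e \<notin> H \<Longrightarrow> e \<notin> X \<Longrightarrow> H \<union> insert e X - {e} \<union> {f} = H \<union> insert f X"
  by auto

lemma mult_abstract:
  assumes wf: "wfE VH H"
  and nin: "c \<notin> VH" "p \<notin> VH" "t \<notin> VH" and dist: "c \<noteq> p" "c \<noteq> t" "p \<noteq> t"
  and inV: "a \<in> VH" "b \<in> VH" "a' \<in> VH" "b' \<in> VH"
  and dp: "a \<noteq> b" "a \<noteq> a'" "a \<noteq> b'" "b \<noteq> a'" "b \<noteq> b'" "a' \<noteq> b'"
  and L: "tree (VH \<union> {c, p, t}) (H \<union> {{p, a}, {c, p}, {c, t}, {t, a'}, {t, b'}})"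
  and R: "tree (VH \<union> {c, p, t}) (H \<union> {{p, b}, {c, p}, {c, t}, {t, a'}, {t, b'}})"
  shows "tree (VH \<union> {c, p, t}) (H \<union> {{c, a}, {c, t}, {t, a'}, {p, b}, {p, b'}})"
proof -
  define V where "V = VH \<union> {c, p, t}"
  have HS: "\<forall>e\<in>H. e \<inter> {c, p, t} = {}"
  proof
    fix e assume "e \<in> H"
    then obtain x y where "e = {x, y}" "x \<in> VH" "y \<in> VH" by (rule wfE_E[OF wf])
    then show "e \<inter> {c, p, t} = {}" using nin by auto
  qed
  have Hsub: "e \<subseteq> VH" if eH: "e \<in> H" for e
  proof -
    obtain x y where "e = {x, y}" "x \<in> VH" "y \<in> VH" by (rule wfE_E[OF wf eH])
    then show ?thesis by simp
  qed
  have notH: "{x, y} \<notin> H" if "x \<notin> VH" for x y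
    using Hsub[of "{x, y}"] that by blast
  define EL where "EL = H \<union> {{p, a}, {c, p}, {c, t}, {t, a'}, {t, b'}}"
  define ERR where "ERR = H \<union> {{p, b}, {c, p}, {c, t}, {t, a'}, {t, b'}}"
  have wfV: "wfE V (H \<union> {{x1, y1}, {x2, y2}, {x3, y3}, {x4, y4}, {x5, y5}})"
    if "x1 \<in> V" "y1 \<in> V" "x2 \<in> V" "y2 \<in> V" "x3 \<in> V" "y3 \<in> V" "x4 \<in> V" "y4 \<in> V" "x5 \<in> V" "y5 \<in> V"
    for x1 y1 x2 y2 x3 y3 x4 y4 x5 y5
  proof (rule wfE_Un)
    show "wfE V H" using wf by (rule wfE_mono) (auto simp: V_def)
    show "wfE V {{x1, y1}, {x2, y2}, {x3, y3}, {x4, y4}, {x5, y5}}"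
      by (intro wfE_insert wfE_empty that)
  qed
  have inV': "a \<in> V" "b \<in> V" "a' \<in> V" "b' \<in> V" "c \<in> V" "p \<in> V" "t \<in> V"
    using inV unfolding V_def by auto
  have cnL: "ug_connected V EL" and brR: "bridges ERR"
    using L R unfolding tree_def V_def EL_def ERR_def by auto
  have cb: "conn (H \<union> {{p, a}, {c, p}, {c, t}, {t, a'}, {t, b'}}) b c"
    using ug_connectedD[OF cnL inV'(2) inV'(5)] unfolding EL_def .
  have bS: "b \<notin> {c, p, t}" using inV nin by auto
  obtain e q where eq: "e \<in> {{p, a}, {c, p}, {c, t}, {t, a'}, {t, b'}}" "q \<in> e" "q \<notin> {c, p, t}"
      "conn H b q"
    using first_entry[OF cb _ HS] bS by blast
  have q3: "q = a \<or> q = a' \<or> q = b'" using eq(1-3) by auto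
  have ERsub: "H \<subseteq> ERR - {{p, b}}" using notH[of p b] nin by (auto simp: ERR_def)
  have pcR: "conn (ERR - {{p, b}}) p t"
  proof -
    have "{p, c} \<in> ERR - {{p, b}}" using inV nin by (auto simp: ERR_def doubleton_eq_iff)
    then have 1: "conn (ERR - {{p, b}}) p c" by (rule conn_edge)
    have "{c, t} \<in> ERR - {{p, b}}" using inV nin dist by (auto simp: ERR_def doubleton_eq_iff)
    then have 2: "conn (ERR - {{p, b}}) c t" by (rule conn_edge)
    from 1 2 show ?thesis by (rule conn_trans)
  qed
  have nq: False if "q = a' \<or> q = b'"
  proof -
    have "{t, q} \<in> ERR - {{p, b}}" using that inV nin dist by (auto simp: ERR_def doubleton_eq_iff)
    then have "conn (ERR - {{p, b}}) t q" by (rule conn_edge)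
    moreover have "conn (ERR - {{p, b}}) q b" using conn_mono[OF conn_sym[OF eq(4)] ERsub] .
    ultimately have "conn (ERR - {{p, b}}) p b" using pcR by (meson conn_trans)
    moreover have "{p, b} \<in> ERR" by (simp add: ERR_def)
    moreover have "p \<noteq> b" using inV nin by auto
    ultimately show False using bridgesD[OF brR] by blast
  qed
  have bHa: "conn H b a" using q3 nq eq(4) by auto
  define X0 where "X0 = {{p, a}, {c, p}, {c, t}, {t, a'}}"
  define X1 where "X1 = {{p, b'}, {p, a}, {c, t}, {t, a'}}"
  define X2 where "X2 = {{a, c}, {p, b'}, {c, t}, {t, a'}}"
  have ELeq: "EL = H \<union> insert {t, b'} X0" unfolding EL_def X0_def by blast
  have t0: "tree V (H \<union> insert {t, b'} X0)" using L unfolding V_def ELeq[symmetric] EL_def .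
  have w0: "wfE V (H \<union> insert {t, b'} X0)" unfolding X0_def by (rule wfV) (use inV' in auto)
  have n0: "{t, b'} \<notin> H" "{t, b'} \<notin> X0"
    using notH[of t b'] nin inV dist dp unfolding X0_def by (auto simp: doubleton_eq_iff)
  have c1: "conn (H \<union> insert {t, b'} X0 - {{t, b'}}) p t"
  proof -
    have "{p, c} \<in> H \<union> insert {t, b'} X0 - {{t, b'}}" using inV nin dist by (auto simp: X0_def doubleton_eq_iff)
    then have 1: "conn (H \<union> insert {t, b'} X0 - {{t, b'}}) p c" by (rule conn_edge)
    have "{c, t} \<in> H \<union> insert {t, b'} X0 - {{t, b'}}" using inV nin dist by (auto simp: X0_def doubleton_eq_iff)
    then have 2: "conn (H \<union> insert {t, b'} X0 - {{t, b'}}) c t" by (rule conn_edge)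
    from 1 2 show ?thesis by (rule conn_trans)
  qed
  have tb: "t \<noteq> b'" using inV nin by auto
  have ex1: "tree V (H \<union> insert {t, b'} X0 - {{t, b'}} \<union> {{p, b'}})" "wfE V (H \<union> insert {t, b'} X0 - {{t, b'}} \<union> {{p, b'}})"
    using exchange[OF t0 w0 _ tb inV'(7) inV'(4) inV'(6) c1] by simp_all
  have e1: "H \<union> insert {t, b'} X0 - {{t, b'}} \<union> {{p, b'}} = H \<union> insert {p, c} X1"
    using swap_edge[OF n0] unfolding X0_def X1_def by (simp add: insert_commute)
  have t1: "tree V (H \<union> insert {p, c} X1)" "wfE V (H \<union> insert {p, c} X1)" using ex1 e1 by simp_all
  have n1: "{p, c} \<notin> H" "{p, c} \<notin> X1"
    using notH[of p c] nin inV dist dp unfolding X1_def by (auto simp: doubleton_eq_iff)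
  have c2: "conn (H \<union> insert {p, c} X1 - {{p, c}}) a p"
  proof -
    have "{a, p} \<in> H \<union> insert {p, c} X1 - {{p, c}}" using inV nin dist by (auto simp: X1_def doubleton_eq_iff)
    then show ?thesis by (rule conn_edge)
  qed
  have ex2: "tree V (H \<union> insert {p, c} X1 - {{p, c}} \<union> {{a, c}})"
    "wfE V (H \<union> insert {p, c} X1 - {{p, c}} \<union> {{a, c}})"
    using exchange[OF t1 _ dist(1)[symmetric] inV'(6) inV'(5) inV'(1) c2] by simp_all
  have e2: "H \<union> insert {p, c} X1 - {{p, c}} \<union> {{a, c}} = H \<union> insert {a, p} X2"
    using swap_edge[OF n1] unfolding X1_def X2_def by (simp add: insert_commute)
  have t2: "tree V (H \<union> insert {a, p} X2)" "wfE V (H \<union> insert {a, p} X2)" using ex2 e2 by simp_all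
  have n2a: "{a, p} \<notin> H"
  proof
    assume "{a, p} \<in> H" then have "{p, a} \<in> H" by (simp add: insert_commute)
    then show False using notH[of p a] nin by blast
  qed
  have n2b: "{a, p} \<notin> X2" using nin inV dist dp unfolding X2_def by (auto simp: doubleton_eq_iff)
  note n2 = n2a n2b
  have c3: "conn (H \<union> insert {a, p} X2 - {{a, p}}) b a"
  proof -
    have "H \<subseteq> H \<union> insert {a, p} X2 - {{a, p}}" using n2(1) by blast
    then show ?thesis by (rule conn_mono[OF bHa])
  qed
  have ap: "a \<noteq> p" using inV nin by auto
  have ex3: "tree V (H \<union> insert {a, p} X2 - {{a, p}} \<union> {{b, p}})"
    using exchange[OF t2 _ ap inV'(1) inV'(6) inV'(2) c3] by simp
  have e3: "H \<union> insert {a, p} X2 - {{a, p}} \<union> {{b, p}} = H \<union> {{c, a}, {c, t}, {t, a'}, {p, b}, {p, b'}}"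
    using swap_edge[OF n2] unfolding X2_def by (simp add: insert_commute)
  show ?thesis using ex3 e3 V_def by simp
qed

definition nosing :: "'v set set \<Rightarrow> bool" where
  "nosing E \<longleftrightarrow> (\<forall>e\<in>E. \<forall>z. e \<noteq> {z})"

lemma imgE_Un: "imgE \<phi> (A \<union> B) = imgE \<phi> A \<union> imgE \<phi> B"
  unfolding imgE_def by blast

lemma imgE_empty[simp]: "imgE \<phi> {} = {}"
  unfolding imgE_def by blast

lemma imgE_insert: "imgE \<phi> (insert e E) = (if \<exists>z. \<phi> ` e = {z} then imgE \<phi> E else insert (\<phi> ` e) (imgE \<phi> E))"
  unfolding imgE_def by auto

lemma imgE_UN: "imgE \<phi> (\<Union>k\<in>K. F k) = (\<Union>k\<in>K. imgE \<phi> (F k))"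
  unfolding imgE_def by blast

lemma imgE_pair: "\<phi> x \<noteq> \<phi> y \<Longrightarrow> imgE \<phi> {{x, y}} = {{\<phi> x, \<phi> y}}"
  by (auto simp: imgE_insert doubleton_eq_iff)

lemma imgE_pair_coll: "\<phi> x = \<phi> y \<Longrightarrow> imgE \<phi> {{x, y}} = {}"
  by (auto simp: imgE_insert)

lemma imgE_id:
  assumes "\<forall>e\<in>E. \<forall>x\<in>e. \<phi> x = x" "nosing E"
  shows "imgE \<phi> E = E"
proof -
  have "\<phi> ` e = e" if "e \<in> E" for e using assms(1) that by force
  moreover have "\<forall>z. e \<noteq> {z}" if "e \<in> E" for e using assms(2) that unfolding nosing_def by blast
  ultimately show ?thesis unfolding imgE_def by force
qed

lemma nosing_Un: "nosing A \<Longrightarrow> nosing B \<Longrightarrow> nosing (A \<union> B)"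
  unfolding nosing_def by blast

definition goodf :: "(bool list \<Rightarrow> vtx) \<Rightarrow> bool" where
  "goodf f \<longleftrightarrow> inj f \<and> (\<forall>r i. f r \<noteq> VL i)"

lemma goodf_VP: "goodf VP" unfolding goodf_def inj_def by simp
lemma goodf_VG: "goodf (VG k)" unfolding goodf_def inj_def by simp

lemma tedges_Node:
  "tedges s f p (Node c A B) =
     (if c = Par then (if s (f p) then {{f p, troot f (p @ [True]) B}} else {{f p, troot f (p @ [False]) A}})
      else {{f p, troot f (p @ [False]) A}, {f p, troot f (p @ [True]) B}})
     \<union> tedges s f (p @ [False]) A \<union> tedges s f (p @ [True]) B"
  by (simp add: Let_def)

lemma tverts_sub:
  "x \<in> tverts f p T \<Longrightarrow> (\<exists>r. x = f (p @ r)) \<or> (\<exists>i l. x = VL i \<and> (i, l) \<in> set (leaves T))"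
proof (induction T arbitrary: p)
  case (Leaf i l) then show ?case by auto
next
  case (Node c A B)
  from Node.prems have "x = f p \<or> x \<in> tverts f (p @ [False]) A \<or> x \<in> tverts f (p @ [True]) B" by auto
  then show ?case
  proof (elim disjE)
    assume "x = f p" then have "x = f (p @ [])" by simp
    then show ?thesis by blast
  next
    assume "x \<in> tverts f (p @ [False]) A"
    from Node.IH(1)[OF this] show ?thesis
    proof
      assume "\<exists>r. x = f ((p @ [False]) @ r)"
      then obtain r where "x = f ((p @ [False]) @ r)" by blast
      then have "x = f (p @ (False # r))" by simp
      then show ?thesis by blast
    next
      assume "\<exists>i l. x = VL i \<and> (i, l) \<in> set (leaves A)"
      then show ?thesis by auto
    qed
  next
    assume "x \<in> tverts f (p @ [True]) B"
    from Node.IH(2)[OF this] show ?thesis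
    proof
      assume "\<exists>r. x = f ((p @ [True]) @ r)"
      then obtain r where "x = f ((p @ [True]) @ r)" by blast
      then have "x = f (p @ (True # r))" by simp
      then show ?thesis by blast
    next
      assume "\<exists>i l. x = VL i \<and> (i, l) \<in> set (leaves B)"
      then show ?thesis by auto
    qed
  qed
qed

lemma troot_in: "troot f p T \<in> tverts f p T"
  by (cases T) auto

lemma tedges_wf: "wfE (tverts f p T) (tedges s f p T)"
proof (induction T arbitrary: p)
  case (Leaf i l) then show ?case by (simp add: wfE_def)
next
  case (Node c A B)
  have r: "troot f (p @ [False]) A \<in> tverts f p (Node c A B)" "troot f (p @ [True]) B \<in> tverts f p (Node c A B)"
    "f p \<in> tverts f p (Node c A B)"
    using troot_in[of f "p @ [False]" A] troot_in[of f "p @ [True]" B] by auto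
  have 1: "wfE (tverts f p (Node c A B)) (tedges s f (p @ [False]) A)"
    by (rule wfE_mono[OF Node.IH(1)]) auto
  have 2: "wfE (tverts f p (Node c A B)) (tedges s f (p @ [True]) B)"
    by (rule wfE_mono[OF Node.IH(2)]) auto
  have 3: "wfE (tverts f p (Node c A B)) {{f p, troot f (p @ [False]) A}, {f p, troot f (p @ [True]) B}}"
    by (intro wfE_insert wfE_empty r)
  have 4: "wfE (tverts f p (Node c A B)) {{f p, troot f (p @ [False]) A}}"
    by (intro wfE_insert wfE_empty r)
  have 5: "wfE (tverts f p (Node c A B)) {{f p, troot f (p @ [True]) B}}"
    by (intro wfE_insert wfE_empty r)
  have G: "wfE (tverts f p (Node c A B)) (if c = Par then (if s (f p) then {{f p, troot f (p @ [True]) B}} else {{f p, troot f (p @ [False]) A}})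
      else {{f p, troot f (p @ [False]) A}, {f p, troot f (p @ [True]) B}})" using 3 4 5 by simp
  show ?case unfolding tedges_Node by (rule wfE_Un[OF wfE_Un[OF G 1] 2])
qed

lemma troot_ne: "goodf f \<Longrightarrow> f p \<noteq> troot f (p @ [b]) A"
  by (cases A) (auto simp: goodf_def inj_def)

lemma tedges_nosing: "goodf f \<Longrightarrow> nosing (tedges s f p T)"
proof (induction T arbitrary: p)
  case (Leaf i l) then show ?case by (simp add: nosing_def)
next
  case (Node c A B)
  have "f p \<noteq> troot f (p @ [False]) A" "f p \<noteq> troot f (p @ [True]) B"
    using troot_ne[OF Node.prems] by auto
  then have "nosing (if c = Par then (if s (f p) then {{f p, troot f (p @ [True]) B}} else {{f p, troot f (p @ [False]) A}})
      else {{f p, troot f (p @ [False]) A}, {f p, troot f (p @ [True]) B}})"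
    unfolding nosing_def by (auto simp: doubleton_eq_iff)
  then show ?case unfolding tedges_Node using Node.IH[OF Node.prems]
    by (intro nosing_Un)
qed

lemma tedges_sub: "e \<in> tedges s f p T \<Longrightarrow> e \<subseteq> tverts f p T"
proof -
  assume a: "e \<in> tedges s f p T"
  obtain x y where "e = {x, y}" "x \<in> tverts f p T" "y \<in> tverts f p T" by (rule wfE_E[OF tedges_wf a])
  then show ?thesis by simp
qed

lemma tedges_s_cong: "(\<forall>x\<in>tverts f p T. s x = s2 x) \<Longrightarrow> tedges s f p T = tedges s2 f p T"
proof (induction T arbitrary: p)
  case (Leaf i l) then show ?case by simp
next
  case (Node c A B)
  have "s (f p) = s2 (f p)" using Node.prems by simp
  moreover have "tedges s f (p @ [False]) A = tedges s2 f (p @ [False]) A"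
    using Node.IH(1) Node.prems by simp
  moreover have "tedges s f (p @ [True]) B = tedges s2 f (p @ [True]) B"
    using Node.IH(2) Node.prems by simp
  ultimately show ?case unfolding tedges_Node by simp
qed

lemma relabel:
  assumes "\<forall>r. \<phi> (f (p @ r)) = g (q @ r)" "\<forall>r. s (f (p @ r)) = s' (g (q @ r))"
    "\<forall>i l. (i, l) \<in> set (leaves T) \<longrightarrow> \<phi> (VL i) = VL i" "goodf g"
  shows "\<phi> ` tverts f p T = tverts g q T \<and> imgE \<phi> (tedges s f p T) = tedges s' g q T
     \<and> \<phi> (troot f p T) = troot g q T"
  using assms
proof (induction T arbitrary: p q)
  case (Leaf i l) then show ?case by simp
next
  case (Node c A B)
  have hA: "\<forall>r. \<phi> (f ((p @ [False]) @ r)) = g ((q @ [False]) @ r)" "\<forall>r. s (f ((p @ [False]) @ r)) = s' (g ((q @ [False]) @ r))"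
    using Node.prems(1,2) by simp_all
  have hB: "\<forall>r. \<phi> (f ((p @ [True]) @ r)) = g ((q @ [True]) @ r)" "\<forall>r. s (f ((p @ [True]) @ r)) = s' (g ((q @ [True]) @ r))"
    using Node.prems(1,2) by simp_all
  have lA: "\<forall>i l. (i, l) \<in> set (leaves A) \<longrightarrow> \<phi> (VL i) = VL i" using Node.prems(3) by simp
  have lB: "\<forall>i l. (i, l) \<in> set (leaves B) \<longrightarrow> \<phi> (VL i) = VL i" using Node.prems(3) by simp
  note IA = Node.IH(1)[OF hA lA Node.prems(4)]
  note IB = Node.IH(2)[OF hB lB Node.prems(4)]
  have fp: "\<phi> (f p) = g q" "s (f p) = s' (g q)" using Node.prems(1)[rule_format, of "[]"] Node.prems(2)[rule_format, of "[]"] by simp_all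
  have neA: "g q \<noteq> troot g (q @ [False]) A" and neB: "g q \<noteq> troot g (q @ [True]) B"
    using troot_ne[OF Node.prems(4)] by auto
  have eA: "imgE \<phi> {{f p, troot f (p @ [False]) A}} = {{g q, troot g (q @ [False]) A}}"
    using imgE_pair[of \<phi> "f p" "troot f (p @ [False]) A"] IA fp neA by simp
  have eB: "imgE \<phi> {{f p, troot f (p @ [True]) B}} = {{g q, troot g (q @ [True]) B}}"
    using imgE_pair[of \<phi> "f p" "troot f (p @ [True]) B"] IB fp neB by simp
  have eAB: "imgE \<phi> {{f p, troot f (p @ [False]) A}, {f p, troot f (p @ [True]) B}} = {{g q, troot g (q @ [False]) A}, {g q, troot g (q @ [True]) B}}"
  proof -
    have "{{f p, troot f (p @ [False]) A}, {f p, troot f (p @ [True]) B}} = {{f p, troot f (p @ [False]) A}} \<union> {{f p, troot f (p @ [True]) B}}" by blast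
    moreover have "{{g q, troot g (q @ [False]) A}, {g q, troot g (q @ [True]) B}} = {{g q, troot g (q @ [False]) A}} \<union> {{g q, troot g (q @ [True]) B}}" by blast
    ultimately show ?thesis using eA eB by (simp only: imgE_Un)
  qed
  have E: "imgE \<phi> (tedges s f p (Node c A B)) = tedges s' g q (Node c A B)"
    unfolding tedges_Node imgE_Un using IA IB eA eB eAB fp by simp
  show ?case using E IA IB fp by (simp add: image_Un)
qed

fun cpos :: "'a ctx \<Rightarrow> bool list" where
  "cpos Hole = []"
| "cpos (CL c C B) = False # cpos C"
| "cpos (CR c A C) = True # cpos C"

fun cverts :: "(bool list \<Rightarrow> vtx) \<Rightarrow> bool list \<Rightarrow> 'a ctx \<Rightarrow> vtx set" where
  "cverts f p Hole = {}"
| "cverts f p (CL c C B) = {f p} \<union> cverts f (p @ [False]) C \<union> tverts f (p @ [True]) B"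
| "cverts f p (CR c A C) = {f p} \<union> tverts f (p @ [False]) A \<union> cverts f (p @ [True]) C"

fun croot :: "(bool list \<Rightarrow> vtx) \<Rightarrow> bool list \<Rightarrow> 'a ctx \<Rightarrow> vtx \<Rightarrow> vtx" where
  "croot f p Hole r = r"
| "croot f p (CL c C B) r = f p"
| "croot f p (CR c A C) r = f p"

definition nedges :: "(vtx \<Rightarrow> bool) \<Rightarrow> vtx \<Rightarrow> conn \<Rightarrow> vtx \<Rightarrow> vtx \<Rightarrow> vtx set set" where
  "nedges s v c x y = (if c = Par then (if s v then {{v, y}} else {{v, x}}) else {{v, x}, {v, y}})"

lemma tedges_Node2:
  "tedges s f p (Node c A B) = nedges s (f p) c (troot f (p @ [False]) A) (troot f (p @ [True]) B)
     \<union> tedges s f (p @ [False]) A \<union> tedges s f (p @ [True]) B"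
  unfolding nedges_def by (simp add: Let_def)

fun cedges :: "(vtx \<Rightarrow> bool) \<Rightarrow> (bool list \<Rightarrow> vtx) \<Rightarrow> bool list \<Rightarrow> 'a ctx \<Rightarrow> vtx \<Rightarrow> vtx set set" where
  "cedges s f p Hole r = {}"
| "cedges s f p (CL c C B) r = nedges s (f p) c (croot f (p @ [False]) C r) (troot f (p @ [True]) B)
     \<union> cedges s f (p @ [False]) C r \<union> tedges s f (p @ [True]) B"
| "cedges s f p (CR c A C) r = nedges s (f p) c (troot f (p @ [False]) A) (croot f (p @ [True]) C r)
     \<union> tedges s f (p @ [False]) A \<union> cedges s f (p @ [True]) C r"

fun cl :: "'a ctx \<Rightarrow> (nat \<times> 'a lit) list" where
  "cl Hole = []"
| "cl (CL c C B) = cl C"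
| "cl (CR c A C) = leaves A @ cl C"

fun cr :: "'a ctx \<Rightarrow> (nat \<times> 'a lit) list" where
  "cr Hole = []"
| "cr (CL c C B) = cr C @ leaves B"
| "cr (CR c A C) = cr C"

fun ccf :: "'a ctx \<Rightarrow> bool" where
  "ccf Hole = True"
| "ccf (CL c C B) = (c \<noteq> CutC \<and> ccf C \<and> cutfree B)"
| "ccf (CR c A C) = (c \<noteq> CutC \<and> cutfree A \<and> ccf C)"

lemma leaves_plug: "leaves (plug C X) = cl C @ leaves X @ cr C"
  by (induction C) auto

lemma cutfree_plug: "cutfree (plug C X) \<longleftrightarrow> ccf C \<and> cutfree X"
  by (induction C) auto

lemma plug_verts: "tverts f p (plug C X) = cverts f p C \<union> tverts f (p @ cpos C) X"
  by (induction C arbitrary: p) auto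

lemma troot_plug: "troot f p (plug C X) = croot f p C (troot f (p @ cpos C) X)"
  by (cases C) auto

lemma plug_edges: "tedges s f p (plug C X) = cedges s f p C (troot f (p @ cpos C) X) \<union> tedges s f (p @ cpos C) X"
proof (induction C arbitrary: p)
  case Hole then show ?case by simp
next
  case (CL c C B)
  show ?case unfolding plug.simps tedges_Node2 cedges.simps troot_plug CL.IH by (simp add: Un_ac)
next
  case (CR c A C)
  show ?case unfolding plug.simps tedges_Node2 cedges.simps troot_plug CR.IH by (simp add: Un_ac)
qed

lemma croot_in: "C \<noteq> Hole \<Longrightarrow> croot f p C r \<in> cverts f p C"
  by (cases C) auto

lemma cverts_sub:
  "x \<in> cverts f p C \<Longrightarrow> (\<exists>r. x = f r \<and> \<not> prefix (p @ cpos C) r) \<or> (\<exists>i l. x = VL i \<and> (i, l) \<in> set (cl C @ cr C))"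
proof (induction C arbitrary: p)
  case Hole then show ?case by simp
next
  case (CL c C B)
  from CL.prems have "x = f p \<or> x \<in> cverts f (p @ [False]) C \<or> x \<in> tverts f (p @ [True]) B" by auto
  then show ?case
  proof (elim disjE)
    assume "x = f p"
    moreover have "\<not> prefix (p @ cpos (CL c C B)) p" by (auto dest: prefix_length_le)
    ultimately show ?thesis by blast
  next
    assume "x \<in> cverts f (p @ [False]) C"
    from CL.IH[OF this] show ?thesis by auto
  next
    assume "x \<in> tverts f (p @ [True]) B"
    from tverts_sub[OF this] show ?thesis
    proof
      assume "\<exists>r. x = f ((p @ [True]) @ r)"
      then obtain r where "x = f ((p @ [True]) @ r)" by blast
      moreover have "\<not> prefix (p @ cpos (CL c C B)) ((p @ [True]) @ r)" by simp
      ultimately show ?thesis by blast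
    next
      assume "\<exists>i l. x = VL i \<and> (i, l) \<in> set (leaves B)"
      then show ?thesis by auto
    qed
  qed
next
  case (CR c A C)
  from CR.prems have "x = f p \<or> x \<in> tverts f (p @ [False]) A \<or> x \<in> cverts f (p @ [True]) C" by auto
  then show ?case
  proof (elim disjE)
    assume "x = f p"
    moreover have "\<not> prefix (p @ cpos (CR c A C)) p" by (auto dest: prefix_length_le)
    ultimately show ?thesis by blast
  next
    assume "x \<in> cverts f (p @ [True]) C"
    from CR.IH[OF this] show ?thesis by auto
  next
    assume "x \<in> tverts f (p @ [False]) A"
    from tverts_sub[OF this] show ?thesis
    proof
      assume "\<exists>r. x = f ((p @ [False]) @ r)"
      then obtain r where "x = f ((p @ [False]) @ r)" by blast
      moreover have "\<not> prefix (p @ cpos (CR c A C)) ((p @ [False]) @ r)" by simp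
      ultimately show ?thesis by blast
    next
      assume "\<exists>i l. x = VL i \<and> (i, l) \<in> set (leaves A)"
      then show ?thesis by auto
    qed
  qed
qed

lemma cedges_s_cong: "(\<forall>x\<in>cverts f p C. s x = s2 x) \<Longrightarrow> cedges s f p C r = cedges s2 f p C r"
proof (induction C arbitrary: p)
  case Hole then show ?case by simp
next
  case (CL c C B)
  have "tedges s f (p @ [True]) B = tedges s2 f (p @ [True]) B" using CL.prems by (intro tedges_s_cong) simp
  moreover have "s (f p) = s2 (f p)" using CL.prems by simp
  moreover have "cedges s f (p @ [False]) C r = cedges s2 f (p @ [False]) C r" using CL.prems CL.IH by simp
  ultimately show ?case by (simp add: nedges_def)
next
  case (CR c A C)
  have "tedges s f (p @ [False]) A = tedges s2 f (p @ [False]) A" using CR.prems by (intro tedges_s_cong) simp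
  moreover have "s (f p) = s2 (f p)" using CR.prems by simp
  moreover have "cedges s f (p @ [True]) C r = cedges s2 f (p @ [True]) C r" using CR.prems CR.IH by simp
  ultimately show ?case by (simp add: nedges_def)
qed

lemma nedges_img:
  assumes "\<phi> v = v" "\<phi> x \<noteq> v" "\<phi> y \<noteq> v"
  shows "imgE \<phi> (nedges s v c x y) = nedges s v c (\<phi> x) (\<phi> y)"
proof -
  have 1: "imgE \<phi> {{v, x}} = {{v, \<phi> x}}" using imgE_pair[of \<phi> v x] assms by simp
  have 2: "imgE \<phi> {{v, y}} = {{v, \<phi> y}}" using imgE_pair[of \<phi> v y] assms by simp
  have 3: "imgE \<phi> {{v, x}, {v, y}} = {{v, \<phi> x}, {v, \<phi> y}}"
  proof -
    have "{{v, x}, {v, y}} = {{v, x}} \<union> {{v, y}}" "{{v, \<phi> x}, {v, \<phi> y}} = {{v, \<phi> x}} \<union> {{v, \<phi> y}}" by auto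
    then show ?thesis using 1 2 by (simp only: imgE_Un)
  qed
  show ?thesis unfolding nedges_def using 1 2 3 by simp
qed

lemma cedges_img:
  assumes g: "goodf f" and id: "\<forall>x\<in>cverts f p C. \<phi> x = x" and r: "\<phi> r \<notin> cverts f p C"
  shows "imgE \<phi> (cedges s f p C r) = cedges s f p C (\<phi> r)"
  using id r
proof (induction C arbitrary: p)
  case Hole then show ?case by simp
next
  case (CL c C B)
  have fp: "\<phi> (f p) = f p" using CL.prems by simp
  have cr: "\<phi> (croot f (p @ [False]) C r) = croot f (p @ [False]) C (\<phi> r)"
    using CL.prems by (cases C) auto
  have crne: "croot f (p @ [False]) C (\<phi> r) \<noteq> f p"
  proof (cases "C = Hole")
    case True then show ?thesis using CL.prems by auto
  next
    case False then show ?thesis using g by (cases C) (auto simp: goodf_def inj_def)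
  qed
  have tB: "\<phi> (troot f (p @ [True]) B) = troot f (p @ [True]) B"
    using CL.prems troot_in[of f "p @ [True]" B] by auto
  have tBne: "troot f (p @ [True]) B \<noteq> f p" using troot_ne[OF g, of p True B] by simp
  have eB: "imgE \<phi> (tedges s f (p @ [True]) B) = tedges s f (p @ [True]) B"
  proof (rule imgE_id)
    show "\<forall>e\<in>tedges s f (p @ [True]) B. \<forall>x\<in>e. \<phi> x = x"
      using CL.prems tedges_sub[of _ s f "p @ [True]" B] by fastforce
    show "nosing (tedges s f (p @ [True]) B)" by (rule tedges_nosing[OF g])
  qed
  have IH: "imgE \<phi> (cedges s f (p @ [False]) C r) = cedges s f (p @ [False]) C (\<phi> r)"
    using CL.IH CL.prems by simp
  show ?case unfolding cedges.simps imgE_Un IH eB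
    using nedges_img[of \<phi> "f p" "croot f (p @ [False]) C r" "troot f (p @ [True]) B"] fp cr crne tB tBne by simp
next
  case (CR c A C)
  have fp: "\<phi> (f p) = f p" using CR.prems by simp
  have cr: "\<phi> (croot f (p @ [True]) C r) = croot f (p @ [True]) C (\<phi> r)"
    using CR.prems by (cases C) auto
  have crne: "croot f (p @ [True]) C (\<phi> r) \<noteq> f p"
  proof (cases "C = Hole")
    case True then show ?thesis using CR.prems by auto
  next
    case False then show ?thesis using g by (cases C) (auto simp: goodf_def inj_def)
  qed
  have tA: "\<phi> (troot f (p @ [False]) A) = troot f (p @ [False]) A"
    using CR.prems troot_in[of f "p @ [False]" A] by auto
  have tAne: "troot f (p @ [False]) A \<noteq> f p" using troot_ne[OF g, of p False A] by simp
  have eA: "imgE \<phi> (tedges s f (p @ [False]) A) = tedges s f (p @ [False]) A"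
  proof (rule imgE_id)
    show "\<forall>e\<in>tedges s f (p @ [False]) A. \<forall>x\<in>e. \<phi> x = x"
      using CR.prems tedges_sub[of _ s f "p @ [False]" A] by fastforce
    show "nosing (tedges s f (p @ [False]) A)" by (rule tedges_nosing[OF g])
  qed
  have IH: "imgE \<phi> (cedges s f (p @ [True]) C r) = cedges s f (p @ [True]) C (\<phi> r)"
    using CR.IH CR.prems by simp
  show ?case unfolding cedges.simps imgE_Un IH eA
    using nedges_img[of \<phi> "f p" "troot f (p @ [False]) A" "croot f (p @ [True]) C r"] fp cr crne tA tAne by simp
qed

lemma graph_verts_snoc:
  "graph_verts P (\<Delta> @ [X]) = graph_verts P \<Delta> \<union> tverts (VG (length \<Delta>)) [] X"
proof -
  have "(\<Union>k<length (\<Delta> @ [X]). tverts (VG k) [] ((\<Delta> @ [X]) ! k))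
      = (\<Union>k<length \<Delta>. tverts (VG k) [] (\<Delta> ! k)) \<union> tverts (VG (length \<Delta>)) [] X"
    by (simp add: lessThan_Suc nth_append Un_commute)
  then show ?thesis unfolding graph_verts_def by (simp add: Un_assoc)
qed

lemma switch_edges_snoc:
  "switch_edges s P (\<Delta> @ [X]) = switch_edges s P \<Delta> \<union> tedges s (VG (length \<Delta>)) [] X"
proof -
  have "(\<Union>k<length (\<Delta> @ [X]). tedges s (VG k) [] ((\<Delta> @ [X]) ! k))
      = (\<Union>k<length \<Delta>. tedges s (VG k) [] (\<Delta> ! k)) \<union> tedges s (VG (length \<Delta>)) [] X"
    by (simp add: lessThan_Suc nth_append Un_commute)
  then show ?thesis unfolding switch_edges_def by (simp add: Un_assoc)
qed

lemma graph_wf: "wfE (graph_verts P \<Gamma>) (switch_edges s P \<Gamma>)"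
  unfolding wfE_def
proof
  fix e assume "e \<in> switch_edges s P \<Gamma>"
  then have "e \<in> tedges s VP [] P \<or> (\<exists>k<length \<Gamma>. e \<in> tedges s (VG k) [] (\<Gamma> ! k))"
    unfolding switch_edges_def by blast
  then show "\<exists>x y. e = {x, y} \<and> x \<in> graph_verts P \<Gamma> \<and> y \<in> graph_verts P \<Gamma>"
  proof
    assume "e \<in> tedges s VP [] P"
    then obtain x y where "e = {x, y}" "x \<in> tverts VP [] P" "y \<in> tverts VP [] P"
      by (rule wfE_E[OF tedges_wf])
    then show ?thesis unfolding graph_verts_def by blast
  next
    assume "\<exists>k<length \<Gamma>. e \<in> tedges s (VG k) [] (\<Gamma> ! k)"
    then obtain k where k: "k < length \<Gamma>" "e \<in> tedges s (VG k) [] (\<Gamma> ! k)" by blast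
    then obtain x y where "e = {x, y}" "x \<in> tverts (VG k) [] (\<Gamma> ! k)" "y \<in> tverts (VG k) [] (\<Gamma> ! k)"
      by (meson wfE_E[OF tedges_wf])
    then show ?thesis unfolding graph_verts_def using k(1) by blast
  qed
qed

lemma graph_nosing: "nosing (switch_edges s P \<Gamma>)"
proof -
  have "nosing (tedges s VP [] P)" by (rule tedges_nosing[OF goodf_VP])
  moreover have "nosing (tedges s (VG k) [] (\<Gamma> ! k))" for k by (rule tedges_nosing[OF goodf_VG])
  ultimately show ?thesis unfolding switch_edges_def nosing_def by blast
qed

lemma graph_s_cong: "(\<forall>x\<in>graph_verts P \<Gamma>. s x = s2 x) \<Longrightarrow> switch_edges s P \<Gamma> = switch_edges s2 P \<Gamma>"
proof -
  assume a: "\<forall>x\<in>graph_verts P \<Gamma>. s x = s2 x"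
  have "tedges s VP [] P = tedges s2 VP [] P" using a by (intro tedges_s_cong) (simp add: graph_verts_def)
  moreover have "tedges s (VG k) [] (\<Gamma> ! k) = tedges s2 (VG k) [] (\<Gamma> ! k)" if "k < length \<Gamma>" for k
    using a that by (intro tedges_s_cong) (auto simp: graph_verts_def)
  ultimately show ?thesis unfolding switch_edges_def by simp
qed

lemma graph_img_id:
  assumes "\<forall>x\<in>graph_verts P \<Gamma>. \<phi> x = x"
  shows "imgE \<phi> (switch_edges s P \<Gamma>) = switch_edges s P \<Gamma>" "\<phi> ` graph_verts P \<Gamma> = graph_verts P \<Gamma>"
proof -
  show "imgE \<phi> (switch_edges s P \<Gamma>) = switch_edges s P \<Gamma>"
  proof (rule imgE_id[OF _ graph_nosing])
    show "\<forall>e\<in>switch_edges s P \<Gamma>. \<forall>x\<in>e. \<phi> x = x"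
    proof (intro ballI)
      fix e x assume "e \<in> switch_edges s P \<Gamma>" "x \<in> e"
      moreover obtain a b where "e = {a, b}" "a \<in> graph_verts P \<Gamma>" "b \<in> graph_verts P \<Gamma>"
        by (rule wfE_E[OF graph_wf calculation(1)])
      ultimately show "\<phi> x = x" using assms by auto
    qed
  qed
  show "\<phi> ` graph_verts P \<Gamma> = graph_verts P \<Gamma>" using assms by force
qed

lemma graph_verts_sub:
  "x \<in> graph_verts P \<Gamma> \<Longrightarrow> x \<in> tverts VP [] P \<or> (\<exists>k r. x = VG k r \<and> k < length \<Gamma>) \<or>
     (\<exists>i l. x = VL i \<and> (i, l) \<in> set (concat (map leaves \<Gamma>)))"
proof -
  assume "x \<in> graph_verts P \<Gamma>"
  then have "x \<in> tverts VP [] P \<or> (\<exists>k<length \<Gamma>. x \<in> tverts (VG k) [] (\<Gamma> ! k))"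
    unfolding graph_verts_def by blast
  then show ?thesis
  proof
    assume "\<exists>k<length \<Gamma>. x \<in> tverts (VG k) [] (\<Gamma> ! k)"
    then obtain k where k: "k < length \<Gamma>" "x \<in> tverts (VG k) [] (\<Gamma> ! k)" by blast
    from tverts_sub[OF k(2)] show ?thesis
    proof
      assume "\<exists>r. x = VG k ([] @ r)" then show ?thesis using k(1) by auto
    next
      assume "\<exists>i l. x = VL i \<and> (i, l) \<in> set (leaves (\<Gamma> ! k))"
      then obtain i l where "x = VL i" "(i, l) \<in> set (leaves (\<Gamma> ! k))" by blast
      moreover have "\<Gamma> ! k \<in> set \<Gamma>" using k(1) by simp
      ultimately show ?thesis by auto
    qed
  qed simp
qed

lemma correct_tree:
  "correct P \<Gamma> \<longleftrightarrow> pre_proof_graph P \<Gamma> \<and> (\<forall>s. tree (graph_verts P \<Gamma>) (switch_edges s P \<Gamma>))"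
  unfolding correct_def tree_def acyclic_iff_bridges by blast

lemma mset_concat_map: "mset (concat (map f xs)) = sum_mset (image_mset (mset \<circ> f) (mset xs))"
proof -
  have "mset (concat (map f xs)) = sum_list (map (mset \<circ> f) xs)" by (simp add: mset_concat)
  also have "\<dots> = sum_mset (mset (map (mset \<circ> f) xs))" by (rule sum_mset_sum_list[symmetric])
  finally show ?thesis by (simp only: mset_map)
qed

lemma mset_concat_cong: "mset xs = mset ys \<Longrightarrow> mset (concat (map f xs)) = mset (concat (map f ys))"
  by (simp add: mset_concat_map)

lemma tree_cong: "tree V E \<Longrightarrow> V = V' \<Longrightarrow> E = E' \<Longrightarrow> tree V' E'" by simp

lemma contract_inj:
  assumes "tree V E" "wfE V E" "inj_on \<phi> V"
  shows "tree (\<phi> ` V) (imgE \<phi> E)"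
  using assms(1,2) by (rule contract) (use assms(3) in \<open>auto dest: inj_onD\<close>)

lemma perm_correct:
  assumes c: "correct P \<Gamma>" and m: "mset \<Gamma>2 = mset \<Gamma>"
  shows "correct P \<Gamma>2"
proof -
  obtain p where p: "p permutes {..<length \<Gamma>2}" "permute_list p \<Gamma>2 = \<Gamma>"
    using mset_eq_permutation[OF m[symmetric]] by blast
  have len: "length \<Gamma> = length \<Gamma>2" using m by (metis size_mset)
  define n where "n = length \<Gamma>2"
  have nth: "\<Gamma> ! k = \<Gamma>2 ! (p k)" if "k < n" for k
    using p permute_list_nth[OF p(1)] that unfolding n_def by (metis)
  have pimg: "p ` {..<n} = {..<n}" using permutes_image[OF p(1)] n_def by simp
  have pinj: "inj p" using permutes_inj[OF p(1)] .
  define \<phi> where "\<phi> v = (case v of VG k r \<Rightarrow> VG (p k) r | _ \<Rightarrow> v)" for v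
  have \<phi>inj: "inj \<phi>"
    unfolding inj_def \<phi>_def using pinj by (auto split: vtx.splits dest: injD)
  have ppg: "pre_proof_graph P \<Gamma>" using c unfolding correct_def by simp
  have ppg2: "pre_proof_graph P \<Gamma>2"
  proof -
    have "set \<Gamma>2 = set \<Gamma>" using m by (metis set_mset_mset)
    moreover have "mset (concat (map leaves \<Gamma>2)) = mset (concat (map leaves \<Gamma>))" by (rule mset_concat_cong[OF m])
    ultimately show ?thesis using ppg unfolding pre_proof_graph_def by simp
  qed
  have trees: "\<forall>s. tree (graph_verts P \<Gamma>) (switch_edges s P \<Gamma>)" using c unfolding correct_tree by simp
  have "tree (graph_verts P \<Gamma>2) (switch_edges s P \<Gamma>2)" for s
  proof -
    define s0 where "s0 = s \<circ> \<phi>"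
    have t0: "tree (\<phi> ` graph_verts P \<Gamma>) (imgE \<phi> (switch_edges s0 P \<Gamma>))"
      using contract_inj[OF trees[rule_format, of s0] graph_wf] \<phi>inj by (meson inj_on_subset subset_UNIV)
    have RP: "\<phi> ` tverts VP [] P = tverts VP [] P \<and> imgE \<phi> (tedges s0 VP [] P) = tedges s VP [] P \<and> \<phi> (troot VP [] P) = troot VP [] P"
      by (rule relabel) (auto simp: \<phi>_def s0_def goodf_VP)
    have RG: "\<phi> ` tverts (VG k) [] (\<Gamma> ! k) = tverts (VG (p k)) [] (\<Gamma>2 ! (p k))
       \<and> imgE \<phi> (tedges s0 (VG k) [] (\<Gamma> ! k)) = tedges s (VG (p k)) [] (\<Gamma>2 ! (p k))" if "k < n" for k
      using relabel[of \<phi> "VG k" "[]" "VG (p k)" "[]" s0 s "\<Gamma> ! k"] nth[OF that]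
      by (auto simp: \<phi>_def s0_def goodf_VG)
    have V: "\<phi> ` graph_verts P \<Gamma> = graph_verts P \<Gamma>2"
    proof -
      have "\<phi> ` graph_verts P \<Gamma> = tverts VP [] P \<union> (\<Union>k<n. tverts (VG (p k)) [] (\<Gamma>2 ! (p k)))"
        unfolding graph_verts_def image_Un image_UN using RP RG len n_def by simp
      also have "(\<Union>k<n. tverts (VG (p k)) [] (\<Gamma>2 ! (p k))) = (\<Union>j\<in>p ` {..<n}. tverts (VG j) [] (\<Gamma>2 ! j))"
        by simp
      also have "\<dots> = (\<Union>j<n. tverts (VG j) [] (\<Gamma>2 ! j))" using pimg by simp
      finally show ?thesis unfolding graph_verts_def n_def by simp
    qed
    have E: "imgE \<phi> (switch_edges s0 P \<Gamma>) = switch_edges s P \<Gamma>2"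
    proof -
      have "imgE \<phi> (switch_edges s0 P \<Gamma>) = tedges s VP [] P \<union> (\<Union>k<n. tedges s (VG (p k)) [] (\<Gamma>2 ! (p k)))"
        unfolding switch_edges_def imgE_Un imgE_UN using RP RG len n_def by simp
      also have "(\<Union>k<n. tedges s (VG (p k)) [] (\<Gamma>2 ! (p k))) = (\<Union>j\<in>p ` {..<n}. tedges s (VG j) [] (\<Gamma>2 ! j))"
        by simp
      also have "\<dots> = (\<Union>j<n. tedges s (VG j) [] (\<Gamma>2 ! j))" using pimg by simp
      finally show ?thesis unfolding switch_edges_def n_def by simp
    qed
    show ?thesis using t0 V E by simp
  qed
  then show ?thesis unfolding correct_tree using ppg2 by simp
qed

definition Dverts :: "'a ftree list \<Rightarrow> vtx set" where
  "Dverts \<Delta> = (\<Union>k<length \<Delta>. tverts (VG k) [] (\<Delta> ! k))"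

definition Dedges :: "(vtx \<Rightarrow> bool) \<Rightarrow> 'a ftree list \<Rightarrow> vtx set set" where
  "Dedges s \<Delta> = (\<Union>k<length \<Delta>. tedges s (VG k) [] (\<Delta> ! k))"

lemma gv_D: "graph_verts P \<Delta> = tverts VP [] P \<union> Dverts \<Delta>"
  unfolding graph_verts_def Dverts_def ..

lemma se_D: "switch_edges s P \<Delta> = tedges s VP [] P \<union> Dedges s \<Delta>"
  unfolding switch_edges_def Dedges_def ..

lemma Dverts_sub:
  "x \<in> Dverts \<Delta> \<Longrightarrow> (\<exists>m r. x = VG m r \<and> m < length \<Delta>) \<or> (\<exists>i l. x = VL i \<and> (i, l) \<in> set (concat (map leaves \<Delta>)))"
proof -
  assume "x \<in> Dverts \<Delta>"
  then obtain k where k: "k < length \<Delta>" "x \<in> tverts (VG k) [] (\<Delta> ! k)" unfolding Dverts_def by blast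
  from tverts_sub[OF k(2)] show ?thesis
  proof
    assume "\<exists>r. x = VG k ([] @ r)" then show ?thesis using k(1) by auto
  next
    assume "\<exists>i l. x = VL i \<and> (i, l) \<in> set (leaves (\<Delta> ! k))"
    then obtain i l where "x = VL i" "(i, l) \<in> set (leaves (\<Delta> ! k))" by blast
    moreover have "\<Delta> ! k \<in> set \<Delta>" using k(1) by simp
    ultimately show ?thesis by auto
  qed
qed

lemma Dedges_sub: "e \<in> Dedges s \<Delta> \<Longrightarrow> e \<subseteq> Dverts \<Delta>"
proof -
  assume "e \<in> Dedges s \<Delta>"
  then obtain k where k: "k < length \<Delta>" "e \<in> tedges s (VG k) [] (\<Delta> ! k)" unfolding Dedges_def by blast
  have "e \<subseteq> tverts (VG k) [] (\<Delta> ! k)" by (rule tedges_sub[OF k(2)])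
  then show ?thesis unfolding Dverts_def using k(1) by blast
qed

lemma Dedges_img_id:
  assumes "\<forall>x\<in>Dverts \<Delta>. \<phi> x = x"
  shows "imgE \<phi> (Dedges s \<Delta>) = Dedges s \<Delta>" "\<phi> ` Dverts \<Delta> = Dverts \<Delta>"
proof -
  have ns: "nosing (Dedges s \<Delta>)"
  proof -
    have "nosing (tedges s (VG k) [] (\<Delta> ! k))" for k by (rule tedges_nosing[OF goodf_VG])
    then show ?thesis unfolding Dedges_def nosing_def by blast
  qed
  show "imgE \<phi> (Dedges s \<Delta>) = Dedges s \<Delta>"
  proof (rule imgE_id[OF _ ns])
    show "\<forall>e\<in>Dedges s \<Delta>. \<forall>x\<in>e. \<phi> x = x" using assms Dedges_sub by blast
  qed
  show "\<phi> ` Dverts \<Delta> = Dverts \<Delta>" using assms by force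
qed

lemma Dedges_s_cong: "(\<forall>x\<in>Dverts \<Delta>. s x = s2 x) \<Longrightarrow> Dedges s \<Delta> = Dedges s2 \<Delta>"
proof -
  assume a: "\<forall>x\<in>Dverts \<Delta>. s x = s2 x"
  have "tedges s (VG k) [] (\<Delta> ! k) = tedges s2 (VG k) [] (\<Delta> ! k)" if "k < length \<Delta>" for k
    using a that by (intro tedges_s_cong) (auto simp: Dverts_def)
  then show ?thesis unfolding Dedges_def by simp
qed

lemma distinct_fst_mset: "mset xs = mset ys \<Longrightarrow> distinct (map fst xs) \<Longrightarrow> distinct (map fst ys)"
  by (metis mset_eq_imp_distinct_iff mset_map)

lemma Dverts_snoc: "graph_verts P (\<Delta> @ [X]) = tverts VP [] P \<union> Dverts \<Delta> \<union> tverts (VG (length \<Delta>)) [] X"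
  using graph_verts_snoc gv_D by metis

lemma Dedges_snoc: "switch_edges s P (\<Delta> @ [X]) = tedges s VP [] P \<union> Dedges s \<Delta> \<union> tedges s (VG (length \<Delta>)) [] X"
  using switch_edges_snoc se_D by metis

lemma not_prefix_app: "\<not> prefix q r \<Longrightarrow> r \<noteq> q @ x"
  by auto

lemma atom_case:
  assumes c: "correct P (\<Delta> @ [Z])"
  and P: "P = plug C (Node Par (Node Tens (Leaf h (Neg a)) (Leaf i (Pos a))) (Node Tens (Leaf j (Neg a)) (Leaf k (Pos a))))"
  and Z: "Z = Node CutC (Leaf i (Pos a)) (Leaf j (Neg a))"
  and P': "P' = plug C (Node Tens (Leaf h (Neg a)) (Leaf k (Pos a)))"
  shows "correct P' \<Delta>"
proof -
  define n where "n = length \<Delta>"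
  define q where "q = cpos C"
  have ppg: "pre_proof_graph P (\<Delta> @ [Z])" using c by (simp add: correct_def)
  have lvP: "leaves P = cl C @ [(h, Neg a), (i, Pos a), (j, Neg a), (k, Pos a)] @ cr C"
    using P by (simp add: leaves_plug)
  have lvP': "leaves P' = cl C @ [(h, Neg a), (k, Pos a)] @ cr C" using P' by (simp add: leaves_plug)
  have dP: "distinct (map fst (leaves P))" using ppg by (simp add: pre_proof_graph_def)
  have mP: "mset (leaves P) = mset (concat (map leaves \<Delta>) @ [(i, Pos a), (j, Neg a)])"
    using ppg Z by (simp add: pre_proof_graph_def)
  have dG: "distinct (map fst (concat (map leaves \<Delta>) @ [(i, Pos a), (j, Neg a)]))"
    by (rule distinct_fst_mset[OF mP dP])
  have ijD: "i \<notin> fst ` set (concat (map leaves \<Delta>))" "j \<notin> fst ` set (concat (map leaves \<Delta>))"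
    using dG by simp_all
  have iD: "(i, l) \<notin> set (concat (map leaves \<Delta>))" for l using ijD(1) by (metis fst_conv image_eqI)
  have jD: "(j, l) \<notin> set (concat (map leaves \<Delta>))" for l using ijD(2) by (metis fst_conv image_eqI)
  have dP2: "distinct (map fst (cl C) @ h # i # j # k # map fst (cr C))" using dP lvP by simp
  have hijk: "h \<noteq> i" "h \<noteq> j" "h \<noteq> k" "i \<noteq> j" "i \<noteq> k" "j \<noteq> k" using dP2 by auto
  have ijC: "i \<notin> fst ` set (cl C @ cr C)" "j \<notin> fst ` set (cl C @ cr C)" using dP2 by auto
  have iC: "(i, l) \<notin> set (cl C @ cr C)" for l using ijC(1) by (metis fst_conv image_eqI)
  have jC: "(j, l) \<notin> set (cl C @ cr C)" for l using ijC(2) by (metis fst_conv image_eqI)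
  have ppg2: "pre_proof_graph P' \<Delta>"
  proof -
    have cf: "cutfree P'" using ppg P P' unfolding pre_proof_graph_def by (simp add: cutfree_plug)
    have fs: "\<forall>F\<in>set \<Delta>. cutfree F \<or> (\<exists>A B. F = Node CutC A B \<and> cutfree A \<and> cutfree B \<and> is_dual A B)"
      using ppg unfolding pre_proof_graph_def by simp
    have dd: "distinct (map fst (leaves P'))" using dP2 lvP' by auto
    have "mset (leaves P') + {#(i, Pos a), (j, Neg a)#} = mset (leaves P)" using lvP lvP' by simp
    also have "\<dots> = mset (concat (map leaves \<Delta>)) + {#(i, Pos a), (j, Neg a)#}" using mP by simp
    finally have "mset (leaves P') = mset (concat (map leaves \<Delta>))" by simp
    then show ?thesis unfolding pre_proof_graph_def using cf fs dd by simp
  qed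
  have trees: "\<forall>s. tree (graph_verts P (\<Delta> @ [Z])) (switch_edges s P (\<Delta> @ [Z]))"
    using c unfolding correct_tree by simp
  have qC: "VP q \<notin> cverts VP [] C"
  proof
    assume "VP q \<in> cverts VP [] C"
    from cverts_sub[OF this] show False unfolding q_def by auto
  qed
  have "tree (graph_verts P' \<Delta>) (switch_edges s' P' \<Delta>)" for s'
  proof -
    define s where "s = s'(VP q := False)"
    define t1 where "t1 = VP (q @ [False])"
    define t2 where "t2 = VP (q @ [True])"
    define cc where "cc = VG n []"
    define \<phi> where "\<phi> v = (if v = t1 then VP q else if v = t2 \<or> v = VL i \<or> v = VL j \<or> v = cc then VL k else v)" for v
    define CV where "CV = cverts VP [] C"
    define CE where "CE = cedges s' VP [] C (VP q)"
    have sq: "s (VP q) = False" by (simp add: s_def)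
    have CEs: "cedges s VP [] C (VP q) = CE"
      unfolding CE_def using qC by (intro cedges_s_cong) (auto simp: s_def)
    have Ds: "Dedges s \<Delta> = Dedges s' \<Delta>"
    proof (rule Dedges_s_cong, rule ballI)
      fix x assume "x \<in> Dverts \<Delta>"
      from Dverts_sub[OF this] show "s x = s' x" by (auto simp: s_def)
    qed
    have OV: "graph_verts P (\<Delta> @ [Z]) = CV \<union> {VP q, t1, t2, VL h, VL i, VL j, VL k} \<union> Dverts \<Delta> \<union> {cc, VL i, VL j}"
      unfolding Dverts_snoc CV_def t1_def t2_def cc_def n_def q_def P Z plug_verts by auto
    have OE: "switch_edges s P (\<Delta> @ [Z]) = CE \<union> {{VP q, t1}, {t1, VL h}, {t1, VL i}, {t2, VL j}, {t2, VL k}}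
       \<union> Dedges s' \<Delta> \<union> {{cc, VL i}, {cc, VL j}}"
      unfolding Dedges_snoc Ds P Z plug_edges CEs[symmetric] q_def[symmetric]
      by (auto simp: Let_def sq t1_def t2_def cc_def n_def)
    have NV: "graph_verts P' \<Delta> = CV \<union> {VP q, VL h, VL k} \<union> Dverts \<Delta>"
      unfolding gv_D CV_def q_def P' plug_verts by auto
    have NE: "switch_edges s' P' \<Delta> = CE \<union> {{VP q, VL h}, {VP q, VL k}} \<union> Dedges s' \<Delta>"
      unfolding se_D P' plug_edges CE_def q_def by (auto simp: Let_def)
    have Cid: "\<forall>x\<in>CV. \<phi> x = x"
    proof
      fix x assume "x \<in> CV"
      from cverts_sub[OF this[unfolded CV_def]] show "\<phi> x = x"
      proof
        assume "\<exists>r. x = VP r \<and> \<not> prefix ([] @ cpos C) r"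
        then obtain r where r: "x = VP r" "\<not> prefix q r" unfolding q_def by auto
        then have "r \<noteq> q @ [False]" "r \<noteq> q @ [True]" by auto
        then show ?thesis using r unfolding \<phi>_def t1_def t2_def cc_def by auto
      next
        assume "\<exists>i' l. x = VL i' \<and> (i', l) \<in> set (cl C @ cr C)"
        then obtain i' l where "x = VL i'" "(i', l) \<in> set (cl C @ cr C)" by blast
        moreover have "i' \<noteq> i" "i' \<noteq> j" using calculation(2) iC jC by auto
        ultimately show ?thesis unfolding \<phi>_def t1_def t2_def cc_def by auto
      qed
    qed
    have Did: "\<forall>x\<in>Dverts \<Delta>. \<phi> x = x"
    proof
      fix x assume "x \<in> Dverts \<Delta>"
      from Dverts_sub[OF this] show "\<phi> x = x"
      proof
        assume "\<exists>m r. x = VG m r \<and> m < length \<Delta>"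
        then show ?thesis unfolding \<phi>_def t1_def t2_def cc_def n_def by auto
      next
        assume "\<exists>i' l. x = VL i' \<and> (i', l) \<in> set (concat (map leaves \<Delta>))"
        then obtain i' l where "x = VL i'" "(i', l) \<in> set (concat (map leaves \<Delta>))" by blast
        moreover have "i' \<noteq> i" "i' \<noteq> j" using calculation(2) iD jD by auto
        ultimately show ?thesis unfolding \<phi>_def t1_def t2_def cc_def by auto
      qed
    qed
    have vals: "\<phi> (VP q) = VP q" "\<phi> t1 = VP q" "\<phi> t2 = VL k" "\<phi> (VL h) = VL h" "\<phi> (VL i) = VL k"
      "\<phi> (VL j) = VL k" "\<phi> (VL k) = VL k" "\<phi> cc = VL k"
      unfolding \<phi>_def t1_def t2_def cc_def using hijk by auto
    have qne: "VP q \<noteq> VL h" "VP q \<noteq> VL k" by auto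
    have CEimg: "imgE \<phi> CE = CE"
      using cedges_img[OF goodf_VP Cid[unfolded CV_def], of "VP q" s'] vals(1) qC unfolding CE_def by simp
    have Gimg: "imgE \<phi> {{VP q, t1}, {t1, VL h}, {t1, VL i}, {t2, VL j}, {t2, VL k}} = {{VP q, VL h}, {VP q, VL k}}"
      using vals qne by (simp add: imgE_insert)
    have Zimg: "imgE \<phi> {{cc, VL i}, {cc, VL j}} = {}"
      using vals by (simp add: imgE_insert)
    have Eimg: "imgE \<phi> (switch_edges s P (\<Delta> @ [Z])) = switch_edges s' P' \<Delta>"
      unfolding OE NE imgE_Un CEimg Gimg Zimg Dedges_img_id(1)[OF Did] by simp
    have Vimg: "\<phi> ` graph_verts P (\<Delta> @ [Z]) = graph_verts P' \<Delta>"
    proof -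
      have "\<phi> ` CV = CV" using Cid by force
      moreover have "\<phi> ` Dverts \<Delta> = Dverts \<Delta>" by (rule Dedges_img_id(2)[OF Did])
      ultimately show ?thesis unfolding OV NV image_Un using vals by auto
    qed
    define Ec where "Ec = {e \<in> switch_edges s P (\<Delta> @ [Z]). \<exists>z. \<phi> ` e = {z}}"
    have inEc: "{x, y} \<in> Ec" if "{x, y} \<in> switch_edges s P (\<Delta> @ [Z])" "\<phi> x = \<phi> y" for x y
      using that unfolding Ec_def by auto
    have e1: "conn Ec (VP q) t1" by (rule conn_edge, rule inEc) (simp_all add: OE vals)
    have e2: "conn Ec t2 (VL k)" by (rule conn_edge, rule inEc) (simp_all add: OE vals)
    have e3: "conn Ec (VL j) t2" by (rule conn_edge, rule inEc) (simp_all add: OE vals insert_commute)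
    have e4: "conn Ec cc (VL j)" by (rule conn_edge, rule inEc) (simp_all add: OE vals)
    have e5: "conn Ec (VL i) cc" by (rule conn_edge, rule inEc) (simp_all add: OE vals insert_commute)
    have F2: "conn Ec x (VL k)" if "x \<in> {t2, VL i, VL j, cc, VL k}" for x
    proof -
      have jk: "conn Ec (VL j) (VL k)" using e3 e2 by (rule conn_trans)
      have ck: "conn Ec cc (VL k)" using e4 jk by (rule conn_trans)
      have ik: "conn Ec (VL i) (VL k)" using e5 ck by (rule conn_trans)
      show ?thesis using that e2 jk ck ik by auto
    qed
    have fib: "conn Ec x y" if "x \<in> graph_verts P (\<Delta> @ [Z])" "y \<in> graph_verts P (\<Delta> @ [Z])" "\<phi> x = \<phi> y" for x y
    proof -
      have cls: "(x \<in> {VP q, t1} \<and> y \<in> {VP q, t1}) \<or> (x \<in> {t2, VL i, VL j, cc, VL k} \<and> y \<in> {t2, VL i, VL j, cc, VL k}) \<or> x = y"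
        using that(3) unfolding \<phi>_def by (auto split: if_splits)
      then show ?thesis
      proof (elim disjE conjE)
        assume "x \<in> {VP q, t1}" "y \<in> {VP q, t1}"
        then show ?thesis using e1 conn_sym[OF e1] by auto
      next
        assume "x \<in> {t2, VL i, VL j, cc, VL k}" "y \<in> {t2, VL i, VL j, cc, VL k}"
        from F2[OF this(1)] conn_sym[OF F2[OF this(2)]] show ?thesis by (rule conn_trans)
      next
        assume "x = y" then show ?thesis by simp
      qed
    qed
    have "tree (\<phi> ` graph_verts P (\<Delta> @ [Z])) (imgE \<phi> (switch_edges s P (\<Delta> @ [Z])))"
      by (rule contract[OF trees[rule_format] graph_wf]) (use fib in \<open>simp add: Ec_def\<close>)
    then show ?thesis using Vimg Eimg by simp
  qed
  then show ?thesis unfolding correct_tree using ppg2 by simp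
qed

lemma unit_case:
  assumes c: "correct P (\<Delta> @ [Z])"
  and P: "P = plug C (Node Par (Node Tens Q (Leaf i Bot)) (Leaf j One))"
  and Z: "Z = Node CutC (Leaf i Bot) (Leaf j One)"
  and P': "P' = plug C Q"
  shows "correct P' \<Delta>"
proof -
  define n where "n = length \<Delta>"
  define q where "q = cpos C"
  have ppg: "pre_proof_graph P (\<Delta> @ [Z])" using c by (simp add: correct_def)
  have lvP: "leaves P = cl C @ leaves Q @ [(i, Bot), (j, One)] @ cr C"
    using P by (simp add: leaves_plug)
  have lvP': "leaves P' = cl C @ leaves Q @ cr C" using P' by (simp add: leaves_plug)
  have dP: "distinct (map fst (leaves P))" using ppg by (simp add: pre_proof_graph_def)
  have mP: "mset (leaves P) = mset (concat (map leaves \<Delta>) @ [(i, Bot), (j, One)])"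
    using ppg Z by (simp add: pre_proof_graph_def)
  have dG: "distinct (map fst (concat (map leaves \<Delta>) @ [(i, Bot), (j, One)]))"
    by (rule distinct_fst_mset[OF mP dP])
  have ijD: "i \<notin> fst ` set (concat (map leaves \<Delta>))" "j \<notin> fst ` set (concat (map leaves \<Delta>))"
    using dG by simp_all
  have iD: "(i, l) \<notin> set (concat (map leaves \<Delta>))" for l using ijD(1) by (metis fst_conv image_eqI)
  have jD: "(j, l) \<notin> set (concat (map leaves \<Delta>))" for l using ijD(2) by (metis fst_conv image_eqI)
  have dP2: "distinct (map fst (cl C) @ map fst (leaves Q) @ i # j # map fst (cr C))" using dP lvP by simp
  have ij: "i \<noteq> j" using dP2 by auto
  have ijC: "i \<notin> fst ` set (cl C @ cr C)" "j \<notin> fst ` set (cl C @ cr C)" using dP2 by auto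
  have iC: "(i, l) \<notin> set (cl C @ cr C)" for l using ijC(1) by (metis fst_conv image_eqI)
  have jC: "(j, l) \<notin> set (cl C @ cr C)" for l using ijC(2) by (metis fst_conv image_eqI)
  have ijQ: "i \<notin> fst ` set (leaves Q)" "j \<notin> fst ` set (leaves Q)" using dP2 by auto
  have QC: "fst ` set (leaves Q) \<inter> fst ` set (cl C @ cr C) = {}" using dP2 by auto
  have ppg2: "pre_proof_graph P' \<Delta>"
  proof -
    have cf: "cutfree P'" using ppg P P' unfolding pre_proof_graph_def by (simp add: cutfree_plug)
    have fs: "\<forall>F\<in>set \<Delta>. cutfree F \<or> (\<exists>A B. F = Node CutC A B \<and> cutfree A \<and> cutfree B \<and> is_dual A B)"
      using ppg unfolding pre_proof_graph_def by simp
    have dd: "distinct (map fst (leaves P'))" using dP2 lvP' by auto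
    have "mset (leaves P') + {#(i, Bot), (j, One)#} = mset (leaves P)" using lvP lvP' by simp
    also have "\<dots> = mset (concat (map leaves \<Delta>)) + {#(i, Bot), (j, One)#}" using mP by simp
    finally have "mset (leaves P') = mset (concat (map leaves \<Delta>))" by simp
    then show ?thesis unfolding pre_proof_graph_def using cf fs dd by simp
  qed
  have trees: "\<forall>s. tree (graph_verts P (\<Delta> @ [Z])) (switch_edges s P (\<Delta> @ [Z]))"
    using c unfolding correct_tree by simp
  have qC: "VP q \<notin> cverts VP [] C"
  proof
    assume "VP q \<in> cverts VP [] C"
    from cverts_sub[OF this] show False unfolding q_def by auto
  qed
  define R where "R = troot VP q Q"
  have RC: "R \<notin> cverts VP [] C"
  proof (cases Q)
    case (Leaf l x)
    show ?thesis
    proof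
      assume "R \<in> cverts VP [] C"
      then have "VL l \<in> cverts VP [] C" using Leaf R_def by simp
      from cverts_sub[OF this] obtain l' where "(l, l') \<in> set (cl C @ cr C)" by auto
      moreover have "l \<in> fst ` set (leaves Q)" using Leaf by simp
      ultimately show False using QC by (metis IntI empty_iff fst_conv image_eqI)
    qed
  next
    case (Node c A B) then show ?thesis using qC R_def by simp
  qed
  have "tree (graph_verts P' \<Delta>) (switch_edges s' P' \<Delta>)" for s'
  proof -
    define t where "t = VP (q @ [False])"
    define cc where "cc = VG n []"
    define F0 where "F0 = {VP q, t, VL i, VL j, cc}"
    define sh where "sh r = (if prefix (q @ [False, False]) r then q @ drop (length q + 2) r else r)" for r
    define \<phi> where "\<phi> v = (if v \<in> F0 then R else (case v of VP r \<Rightarrow> VP (sh r) | _ \<Rightarrow> v))" for v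
    define s where "s v = (if v = VP q then False else s' (\<phi> v))" for v
    define CV where "CV = cverts VP [] C"
    define QV where "QV = tverts VP (q @ [False, False]) Q"
    define a0 where "a0 = troot VP (q @ [False, False]) Q"
    have sq: "s (VP q) = False" by (simp add: s_def)
    have shQ: "\<phi> (VP ((q @ [False, False]) @ r)) = VP (q @ r)" for r
      unfolding \<phi>_def F0_def t_def cc_def sh_def by auto
    have sQ: "s (VP ((q @ [False, False]) @ r)) = s' (VP (q @ r))" for r
      unfolding s_def using shQ by auto
    have Cid: "\<forall>x\<in>CV. \<phi> x = x"
    proof
      fix x assume "x \<in> CV"
      from cverts_sub[OF this[unfolded CV_def]] show "\<phi> x = x"
      proof
        assume "\<exists>r. x = VP r \<and> \<not> prefix ([] @ cpos C) r"
        then obtain r where r: "x = VP r" "\<not> prefix q r" unfolding q_def by auto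
        then have "r \<noteq> q" "r \<noteq> q @ [False]" by auto
        moreover have "\<not> prefix (q @ [False, False]) r" using r(2) append_prefixD by blast
        ultimately show ?thesis using r unfolding \<phi>_def F0_def t_def cc_def sh_def by auto
      next
        assume "\<exists>i' l. x = VL i' \<and> (i', l) \<in> set (cl C @ cr C)"
        then obtain i' l where "x = VL i'" "(i', l) \<in> set (cl C @ cr C)" by blast
        moreover have "i' \<noteq> i" "i' \<noteq> j" using calculation(2) iC jC by auto
        ultimately show ?thesis unfolding \<phi>_def F0_def t_def cc_def by auto
      qed
    qed
    have Did: "\<forall>x\<in>Dverts \<Delta>. x \<noteq> R \<longrightarrow> \<phi> x = x"
    proof (intro ballI impI)
      fix x assume "x \<in> Dverts \<Delta>" "x \<noteq> R"
      from Dverts_sub[OF this(1)] show "\<phi> x = x"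
      proof
        assume "\<exists>m r. x = VG m r \<and> m < length \<Delta>"
        then show ?thesis unfolding \<phi>_def F0_def t_def cc_def n_def by auto
      next
        assume "\<exists>i' l. x = VL i' \<and> (i', l) \<in> set (concat (map leaves \<Delta>))"
        then obtain i' l where "x = VL i'" "(i', l) \<in> set (concat (map leaves \<Delta>))" by blast
        moreover have "i' \<noteq> i" "i' \<noteq> j" using calculation(2) iD jD by auto
        ultimately show ?thesis unfolding \<phi>_def F0_def t_def cc_def by auto
      qed
    qed
    have Did2: "\<forall>x\<in>Dverts \<Delta>. \<phi> x = x"
    proof
      fix x assume x: "x \<in> Dverts \<Delta>"
      show "\<phi> x = x"
      proof (cases "x = R")
        case False then show ?thesis using Did x by blast
      next
        case True
        from Dverts_sub[OF x] obtain i' l where il: "x = VL i'" "(i', l) \<in> set (concat (map leaves \<Delta>))"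
          using True R_def by (cases Q) auto
        moreover have "i' \<noteq> i" "i' \<noteq> j" using il(2) iD jD by auto
        ultimately show ?thesis unfolding \<phi>_def F0_def t_def cc_def by auto
      qed
    qed
    have RQ: "\<phi> ` QV = tverts VP q Q \<and> imgE \<phi> (tedges s VP (q @ [False, False]) Q) = tedges s' VP q Q
        \<and> \<phi> a0 = R"
    proof -
      have lv: "\<forall>i' l. (i', l) \<in> set (leaves Q) \<longrightarrow> \<phi> (VL i') = VL i'"
      proof (intro allI impI)
        fix i' l assume "(i', l) \<in> set (leaves Q)"
        then have "i' \<noteq> i" "i' \<noteq> j" using ijQ by (metis fst_conv image_eqI)+
        then show "\<phi> (VL i') = VL i'" unfolding \<phi>_def F0_def t_def cc_def by auto
      qed
      show ?thesis unfolding QV_def a0_def R_def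
        by (rule relabel) (use shQ sQ lv goodf_VP in auto)
    qed
    have vals: "\<phi> (VP q) = R" "\<phi> t = R" "\<phi> (VL i) = R" "\<phi> (VL j) = R" "\<phi> cc = R"
      unfolding \<phi>_def F0_def by auto
    have CEs: "cedges s VP [] C (VP q) = cedges s' VP [] C (VP q)"
      using Cid qC by (intro cedges_s_cong) (auto simp: s_def CV_def)
    have Ds: "Dedges s \<Delta> = Dedges s' \<Delta>"
    proof (rule Dedges_s_cong, rule ballI)
      fix x assume "x \<in> Dverts \<Delta>"
      moreover have "x \<noteq> VP q" using Dverts_sub[OF calculation] by auto
      ultimately show "s x = s' x" using Did2 by (auto simp: s_def)
    qed
    have OV: "graph_verts P (\<Delta> @ [Z]) = CV \<union> F0 \<union> QV \<union> Dverts \<Delta>"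
      unfolding Dverts_snoc CV_def t_def cc_def n_def q_def P Z plug_verts QV_def F0_def by auto
    have OE: "switch_edges s P (\<Delta> @ [Z]) = cedges s' VP [] C (VP q) \<union> {{VP q, t}, {t, a0}, {t, VL i}}
       \<union> tedges s VP (q @ [False, False]) Q \<union> Dedges s' \<Delta> \<union> {{cc, VL i}, {cc, VL j}}"
      unfolding Dedges_snoc Ds P Z plug_edges CEs[symmetric] q_def[symmetric]
      by (auto simp: Let_def sq t_def cc_def n_def a0_def)
    have NV: "graph_verts P' \<Delta> = CV \<union> tverts VP q Q \<union> Dverts \<Delta>"
      unfolding gv_D CV_def q_def P' plug_verts by auto
    have NE: "switch_edges s' P' \<Delta> = cedges s' VP [] C R \<union> tedges s' VP q Q \<union> Dedges s' \<Delta>"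
      unfolding se_D P' plug_edges R_def q_def by auto
    have CEimg: "imgE \<phi> (cedges s' VP [] C (VP q)) = cedges s' VP [] C R"
      using cedges_img[OF goodf_VP Cid[unfolded CV_def], of "VP q" s'] vals(1) RC by simp
    have Gimg: "imgE \<phi> ({{VP q, t}, {t, a0}, {t, VL i}} \<union> {{cc, VL i}, {cc, VL j}}) = {}"
      using vals RQ by (simp add: imgE_insert)
    have Eimg: "imgE \<phi> (switch_edges s P (\<Delta> @ [Z])) = switch_edges s' P' \<Delta>"
    proof -
      have "imgE \<phi> (switch_edges s P (\<Delta> @ [Z])) = imgE \<phi> (cedges s' VP [] C (VP q)) \<union>
          imgE \<phi> (tedges s VP (q @ [False, False]) Q) \<union> imgE \<phi> (Dedges s' \<Delta>) \<union>
          imgE \<phi> ({{VP q, t}, {t, a0}, {t, VL i}} \<union> {{cc, VL i}, {cc, VL j}})"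
        unfolding OE imgE_Un[symmetric] by (rule arg_cong[where f = "imgE \<phi>"]) blast
      also have "\<dots> = switch_edges s' P' \<Delta>"
        unfolding CEimg Gimg Dedges_img_id(1)[OF Did2] NE using RQ by simp
      finally show ?thesis .
    qed
    have Vimg: "\<phi> ` graph_verts P (\<Delta> @ [Z]) = graph_verts P' \<Delta>"
    proof -
      have "\<phi> ` CV = CV" using Cid by force
      moreover have "\<phi> ` Dverts \<Delta> = Dverts \<Delta>" by (rule Dedges_img_id(2)[OF Did2])
      moreover have "\<phi> ` F0 = {R}" using vals unfolding F0_def by auto
      moreover have "R \<in> tverts VP q Q" unfolding R_def by (rule troot_in)
      ultimately show ?thesis unfolding OV NV image_Un using RQ by auto
    qed
    define F where "F = insert a0 F0"
    define OVs where "OVs = graph_verts P (\<Delta> @ [Z])"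
    define Ec where "Ec = {e \<in> switch_edges s P (\<Delta> @ [Z]). \<exists>z. \<phi> ` e = {z}}"
    have inEc: "{x, y} \<in> Ec" if "{x, y} \<in> switch_edges s P (\<Delta> @ [Z])" "\<phi> x = \<phi> y" for x y
      using that unfolding Ec_def by auto
    have e1: "conn Ec (VP q) t" by (rule conn_edge, rule inEc) (simp_all add: OE vals)
    have e2: "conn Ec a0 t" by (rule conn_edge, rule inEc) (simp_all add: OE vals RQ insert_commute)
    have e3: "conn Ec (VL i) t" by (rule conn_edge, rule inEc) (simp_all add: OE vals insert_commute)
    have e4: "conn Ec cc (VL i)" by (rule conn_edge, rule inEc) (simp_all add: OE vals)
    have e5: "conn Ec (VL j) cc" by (rule conn_edge, rule inEc) (simp_all add: OE vals insert_commute)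
    have Ft: "conn Ec x t" if "x \<in> F" for x
    proof -
      have ct: "conn Ec cc t" using e4 e3 by (rule conn_trans)
      have jt: "conn Ec (VL j) t" using e5 ct by (rule conn_trans)
      show ?thesis using that e1 e2 e3 ct jt unfolding F_def F0_def by auto
    qed
    have FR: "\<phi> x = R" if "x \<in> F" for x using that vals RQ unfolding F_def F0_def by auto
    have cls: "(\<exists>r. x = VP ((q @ [False, False]) @ r)) \<or> (\<phi> x = x \<and> (\<forall>r0. x = VP r0 \<longrightarrow> \<not> prefix q r0))"
      if "x \<in> OVs" "x \<notin> F" for x
    proof -
      have "x \<in> CV \<or> x \<in> QV \<or> x \<in> Dverts \<Delta>" using that OV unfolding OVs_def F_def by auto
      then show ?thesis
      proof (elim disjE)
        assume "x \<in> CV"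
        moreover from cverts_sub[OF this[unfolded CV_def]]
        have "\<forall>r0. x = VP r0 \<longrightarrow> \<not> prefix q r0" unfolding q_def by auto
        ultimately show ?thesis using Cid by blast
      next
        assume "x \<in> Dverts \<Delta>"
        moreover from Dverts_sub[OF this] have "\<forall>r0. x \<noteq> VP r0" by auto
        ultimately show ?thesis using Did2 by blast
      next
        assume "x \<in> QV"
        from tverts_sub[OF this[unfolded QV_def]] show ?thesis
        proof
          assume "\<exists>i' l. x = VL i' \<and> (i', l) \<in> set (leaves Q)"
          then obtain i' l where il: "x = VL i'" "(i', l) \<in> set (leaves Q)" by blast
          then have "i' \<noteq> i" "i' \<noteq> j" using ijQ by (metis fst_conv image_eqI)+
          then have "\<phi> x = x" using il unfolding \<phi>_def F0_def t_def cc_def by auto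
          then show ?thesis using il by simp
        qed blast
      qed
    qed
    have notR: "\<phi> x \<noteq> R" if "x \<in> OVs" "x \<notin> F" for x
    proof
      assume xR: "\<phi> x = R"
      from cls[OF that] show False
      proof
        assume "\<exists>r. x = VP ((q @ [False, False]) @ r)"
        then obtain r where r: "x = VP ((q @ [False, False]) @ r)" by blast
        then have "VP (q @ r) = R" using xR shQ by simp
        show False
        proof (cases Q)
          case (Leaf l x) then show False using \<open>VP (q @ r) = R\<close> R_def by simp
        next
          case (Node c A B)
          then have "r = []" using \<open>VP (q @ r) = R\<close> R_def by simp
          then have "x = a0" using r Node a0_def by simp
          then show False using that(2) F_def by simp
        qed
      next
        assume a: "\<phi> x = x \<and> (\<forall>r0. x = VP r0 \<longrightarrow> \<not> prefix q r0)"
        then have "x = R" using xR by simp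
        show False
        proof (cases Q)
          case (Leaf l y) then have "x = a0" using \<open>x = R\<close> R_def a0_def by simp
          then show False using that(2) F_def by simp
        next
          case (Node c A B) then have "x = VP q" using \<open>x = R\<close> R_def by simp
          then show False using a by simp
        qed
      qed
    qed
    have injr: "x = y" if "x \<in> OVs" "x \<notin> F" "y \<in> OVs" "y \<notin> F" "\<phi> x = \<phi> y" for x y
    proof -
      have A: False if "x1 = VP ((q @ [False, False]) @ r)" "\<phi> y1 = y1" "\<forall>r0. y1 = VP r0 \<longrightarrow> \<not> prefix q r0"
        "\<phi> x1 = \<phi> y1" for x1 y1 r
      proof -
        have "\<phi> x1 = VP (q @ r)" using that(1) shQ by simp
        then have "y1 = VP (q @ r)" using that(2,4) by simp
        then have "\<not> prefix q (q @ r)" using that(3) by blast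
        then show False by simp
      qed
      from cls[OF that(1,2)] cls[OF that(3,4)] show ?thesis
      proof (elim disjE)
        assume "\<exists>r. x = VP ((q @ [False, False]) @ r)" "\<exists>r. y = VP ((q @ [False, False]) @ r)"
        then obtain r1 r2 where xr: "x = VP ((q @ [False, False]) @ r1)" and yr: "y = VP ((q @ [False, False]) @ r2)" by blast
        have "\<phi> (VP ((q @ [False, False]) @ r1)) = \<phi> (VP ((q @ [False, False]) @ r2))"
          using that(5) unfolding xr yr .
        then have "VP (q @ r1) = VP (q @ r2)" by (simp only: shQ)
        then have "r1 = r2" by simp
        then show ?thesis using xr yr by simp
      next
        assume "\<exists>r. x = VP ((q @ [False, False]) @ r)" "\<phi> y = y \<and> (\<forall>r0. y = VP r0 \<longrightarrow> \<not> prefix q r0)"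
        then obtain r where "x = VP ((q @ [False, False]) @ r)" by blast
        moreover have "\<phi> y = y" "\<forall>r0. y = VP r0 \<longrightarrow> \<not> prefix q r0" using \<open>\<phi> y = y \<and> _\<close> by simp_all
        moreover note that(5)
        ultimately have False by (rule A)
        then show ?thesis by simp
      next
        assume "\<exists>r. y = VP ((q @ [False, False]) @ r)" "\<phi> x = x \<and> (\<forall>r0. x = VP r0 \<longrightarrow> \<not> prefix q r0)"
        then obtain r where "y = VP ((q @ [False, False]) @ r)" by blast
        moreover have "\<phi> x = x" "\<forall>r0. x = VP r0 \<longrightarrow> \<not> prefix q r0" using \<open>\<phi> x = x \<and> _\<close> by simp_all
        moreover have "\<phi> y = \<phi> x" using that(5) by simp
        ultimately have False by (rule A)
        then show ?thesis by simp
      next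
        assume "\<phi> x = x \<and> (\<forall>r0. x = VP r0 \<longrightarrow> \<not> prefix q r0)" "\<phi> y = y \<and> (\<forall>r0. y = VP r0 \<longrightarrow> \<not> prefix q r0)"
        then have "\<phi> x = x" "\<phi> y = y" by simp_all
        then show ?thesis using that(5) by metis
      qed
    qed
    have fib: "conn Ec x y" if "x \<in> OVs" "y \<in> OVs" "\<phi> x = \<phi> y" for x y
    proof (cases "x \<in> F")
      case True
      then have "y \<in> F" using that FR notR by metis
      from Ft[OF True] conn_sym[OF Ft[OF this]] show ?thesis by (rule conn_trans)
    next
      case False
      then have "y \<notin> F" using that FR notR by metis
      then have "x = y" using injr that False by blast
      then show ?thesis by simp
    qed
    have "tree (\<phi> ` graph_verts P (\<Delta> @ [Z])) (imgE \<phi> (switch_edges s P (\<Delta> @ [Z])))"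
      by (rule contract[OF trees[rule_format] graph_wf]) (use fib in \<open>simp add: Ec_def OVs_def\<close>)
    then show ?thesis using Vimg Eimg by simp
  qed
  then show ?thesis unfolding correct_tree using ppg2 by simp
qed

fun mm :: "nat \<Rightarrow> bool list \<Rightarrow> vtx" where
  "mm n [] = VG n []"
| "mm n [b] = (if b then VG n [] else VG (Suc n) [])"
| "mm n (b1 # b2 # r) = (if b1 = b2 then VG n (b1 # r) else VG (Suc n) (b1 # r))"

lemma mm_range: "\<exists>r'. mm n r = VG n r' \<or> mm n r = VG (Suc n) r'"
  by (cases "(n, r)" rule: mm.cases) auto

lemma mm_inj: "mm n r1 = mm n r2 \<Longrightarrow> r1 = r2 \<or> (r1 \<in> {[], [True]} \<and> r2 \<in> {[], [True]})"
  by (cases "(n, r1)" rule: mm.cases; cases "(n, r2)" rule: mm.cases) (auto split: if_splits)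

lemma tree_verts_VG: "x \<in> tverts (VG n) p T \<Longrightarrow> (\<exists>r. x = VG n r) \<or> (\<exists>i. x = VL i)"
  using tverts_sub[of x "VG n" p T] by auto

lemma mult_case:
  assumes c: "correct P (\<Delta> @ [X])" and X: "X = Node CutC (Node Par A B) (Node Tens B' A')"
  shows "correct P (\<Delta> @ [Node CutC A A', Node CutC B B'])"
proof -
  define n where "n = length \<Delta>"
  define Y1 where "Y1 = Node CutC A A'"
  define Y2 where "Y2 = Node CutC B B'"
  have ppg: "pre_proof_graph P (\<Delta> @ [X])" using c by (simp add: correct_def)
  have dP: "distinct (map fst (leaves P))" using ppg by (simp add: pre_proof_graph_def)
  have mP: "mset (leaves P) = mset (concat (map leaves \<Delta>) @ leaves A @ leaves B @ leaves B' @ leaves A')"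
    using ppg X by (simp add: pre_proof_graph_def)
  have dG: "distinct (map fst (concat (map leaves \<Delta>) @ leaves A @ leaves B @ leaves B' @ leaves A'))"
    by (rule distinct_fst_mset[OF mP dP])
  have dAB: "fst ` set (leaves A) \<inter> fst ` set (leaves B) = {}" "fst ` set (leaves A) \<inter> fst ` set (leaves B') = {}"
    "fst ` set (leaves A) \<inter> fst ` set (leaves A') = {}" "fst ` set (leaves B) \<inter> fst ` set (leaves B') = {}"
    "fst ` set (leaves B) \<inter> fst ` set (leaves A') = {}" "fst ` set (leaves B') \<inter> fst ` set (leaves A') = {}"
    using dG by auto
  have ppg2: "pre_proof_graph P (\<Delta> @ [Y1, Y2])"
  proof -
    have fs: "\<forall>F\<in>set (\<Delta> @ [X]). cutfree F \<or> (\<exists>A B. F = Node CutC A B \<and> cutfree A \<and> cutfree B \<and> is_dual A B)"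
      using ppg unfolding pre_proof_graph_def by simp
    then have "cutfree (Node Par A B) \<and> cutfree (Node Tens B' A') \<and> is_dual (Node Par A B) (Node Tens B' A')"
      using X by auto
    then have cf: "cutfree A" "cutfree B" "cutfree B'" "cutfree A'" "is_dual A A'" "is_dual B B'" by auto
    have fs2: "\<forall>F\<in>set (\<Delta> @ [Y1, Y2]). cutfree F \<or> (\<exists>A B. F = Node CutC A B \<and> cutfree A \<and> cutfree B \<and> is_dual A B)"
      using fs cf unfolding Y1_def Y2_def by auto
    have "mset (leaves P) = mset (concat (map leaves (\<Delta> @ [Y1, Y2])))"
      using mP unfolding Y1_def Y2_def by simp
    then show ?thesis using ppg fs2 unfolding pre_proof_graph_def by simp
  qed
  have trees: "\<forall>s. tree (graph_verts P (\<Delta> @ [X])) (switch_edges s P (\<Delta> @ [X]))"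
    using c unfolding correct_tree by simp
  define cv where "cv = VG n []"
  define pv where "pv = VG n [False]"
  define tv where "tv = VG n [True]"
  define a where "a = troot (VG n) [False, False] A"
  define b where "b = troot (VG n) [False, True] B"
  define b' where "b' = troot (VG n) [True, False] B'"
  define a' where "a' = troot (VG n) [True, True] A'"
  define VA where "VA = tverts (VG n) [False, False] A"
  define VB where "VB = tverts (VG n) [False, True] B"
  define VB' where "VB' = tverts (VG n) [True, False] B'"
  define VA' where "VA' = tverts (VG n) [True, True] A'"
  define base where "base = graph_verts P \<Delta>"
  define VH where "VH = base \<union> VA \<union> VB \<union> VB' \<union> VA'"
  define \<phi> where "\<phi> v = (case v of VG m r \<Rightarrow> if m = n then mm n r else v | _ \<Rightarrow> v)" for v
  have OV: "graph_verts P (\<Delta> @ [X]) = VH \<union> {cv, pv, tv}"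
    unfolding graph_verts_snoc VH_def base_def X VA_def VB_def VB'_def VA'_def cv_def pv_def tv_def n_def
    by auto
  have base_sub: "(\<exists>m r. x = VG m r \<and> m < n) \<or> (\<exists>r. x = VP r) \<or> (\<exists>i. x = VL i)" if "x \<in> base" for x
  proof -
    have "x \<in> tverts VP [] P \<or> x \<in> Dverts \<Delta>" using that unfolding base_def gv_D by blast
    then show ?thesis
    proof
      assume "x \<in> tverts VP [] P" then show ?thesis using tverts_sub[of x VP "[]" P] by auto
    next
      assume "x \<in> Dverts \<Delta>" then show ?thesis using Dverts_sub[of x \<Delta>] n_def by auto
    qed
  qed
  have base_id: "\<phi> x = x" if "x \<in> base" for x
    using base_sub[OF that] unfolding \<phi>_def by auto
  have subpos: "\<exists>r. x = VG n (b1 # b2 # r)" if "x \<in> tverts (VG n) [b1, b2] T" "\<forall>i. x \<noteq> VL i" for x b1 b2 T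
    using tverts_sub[OF that(1)] that(2) by auto
  have cls: "(\<exists>r. x = VG n r) \<or> (\<phi> x = x \<and> (\<forall>r. x \<noteq> VG n r \<and> x \<noteq> VG (Suc n) r))" if "x \<in> VH \<union> {cv, pv, tv}" for x
  proof -
    have "x \<in> base \<or> x \<in> VA \<or> x \<in> VB \<or> x \<in> VB' \<or> x \<in> VA' \<or> x \<in> {cv, pv, tv}" using that VH_def by blast
    then show ?thesis
    proof (elim disjE)
      assume "x \<in> base" then show ?thesis using base_sub[of x] base_id[of x] by auto
    qed (auto simp: VA_def VB_def VB'_def VA'_def cv_def pv_def tv_def \<phi>_def dest!: tree_verts_VG)
  qed
  have notcpt: "cv \<notin> VH" "pv \<notin> VH" "tv \<notin> VH"
  proof -
    have "x \<noteq> cv \<and> x \<noteq> pv \<and> x \<noteq> tv" if "x \<in> VH" for x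
    proof -
      have "x \<in> base \<or> x \<in> VA \<or> x \<in> VB \<or> x \<in> VB' \<or> x \<in> VA'" using that VH_def by blast
      then show ?thesis
      proof (elim disjE)
        assume "x \<in> base" then show ?thesis using base_sub[of x] by (auto simp: cv_def pv_def tv_def)
      qed (auto simp: VA_def VB_def VB'_def VA'_def cv_def pv_def tv_def dest!: tverts_sub)
    qed
    then show "cv \<notin> VH" "pv \<notin> VH" "tv \<notin> VH" by blast+
  qed
  have roots: "a \<in> VH" "b \<in> VH" "a' \<in> VH" "b' \<in> VH"
    unfolding VH_def a_def b_def a'_def b'_def VA_def VB_def VB'_def VA'_def using troot_in by blast+
  have rootd: "a \<noteq> b" "a \<noteq> a'" "a \<noteq> b'" "b \<noteq> a'" "b \<noteq> b'" "a' \<noteq> b'"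
  proof -
    have rt: "troot (VG n) [x1, x2] T = VG n [x1, x2] \<or> (\<exists>i l. troot (VG n) [x1, x2] T = VL i \<and> (i, l) \<in> set (leaves T))" for x1 x2 T
      by (cases T) auto
    have dis: "troot (VG n) [x1, x2] T1 \<noteq> troot (VG n) [y1, y2] T2"
      if "[x1, x2] \<noteq> [y1, y2]" "fst ` set (leaves T1) \<inter> fst ` set (leaves T2) = {}" for x1 x2 y1 y2 and T1 T2 :: "'a ftree"
      using rt[of x1 x2 T1] rt[of y1 y2 T2] that by (auto simp: disjoint_iff) (metis fst_conv image_eqI)+
    show "a \<noteq> b" "a \<noteq> a'" "a \<noteq> b'" "b \<noteq> a'" "b \<noteq> b'" "a' \<noteq> b'"
      unfolding a_def b_def a'_def b'_def using dis dAB by (simp_all add: Int_commute)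
  qed
  have "tree (graph_verts P (\<Delta> @ [Y1, Y2])) (switch_edges s' P (\<Delta> @ [Y1, Y2]))" for s'
  proof -
    define s0 where "s0 = s' \<circ> \<phi>"
    define sL where "sL = s0(pv := False)"
    define sR where "sR = s0(pv := True)"
    define EA where "EA = tedges s0 (VG n) [False, False] A"
    define EB where "EB = tedges s0 (VG n) [False, True] B"
    define EB' where "EB' = tedges s0 (VG n) [True, False] B'"
    define EA' where "EA' = tedges s0 (VG n) [True, True] A'"
    define H where "H = switch_edges s0 P \<Delta> \<union> EA \<union> EB \<union> EB' \<union> EA'"
    have sub_eq: "tedges s2 (VG n) [x1, x2] T = tedges s0 (VG n) [x1, x2] T" if "s2 = s0(pv := v)" for s2 x1 x2 v and T :: "'a ftree"
    proof (rule tedges_s_cong, rule ballI)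
      fix x assume "x \<in> tverts (VG n) [x1, x2] T"
      then have "x \<noteq> pv" using tverts_sub[of x "VG n" "[x1, x2]" T] by (auto simp: pv_def)
      then show "s2 x = s0 x" using that by simp
    qed
    have base_eq: "switch_edges s2 P \<Delta> = switch_edges s0 P \<Delta>" if "s2 = s0(pv := v)" for s2 v
    proof (rule graph_s_cong, rule ballI)
      fix x assume "x \<in> graph_verts P \<Delta>"
      then have "x \<noteq> pv" using base_sub[of x] by (auto simp: base_def pv_def n_def)
      then show "s2 x = s0 x" using that by simp
    qed
    have OEL: "switch_edges sL P (\<Delta> @ [X]) = H \<union> {{pv, a}, {cv, pv}, {cv, tv}, {tv, a'}, {tv, b'}}"
      unfolding switch_edges_snoc base_eq[OF sL_def] X H_def
      using sub_eq[OF sL_def, of False False A] sub_eq[OF sL_def, of False True B]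
        sub_eq[OF sL_def, of True False B'] sub_eq[OF sL_def, of True True A']
      by (auto simp: Let_def sL_def pv_def cv_def tv_def a_def b_def a'_def b'_def EA_def EB_def EB'_def EA'_def n_def)
    have OER: "switch_edges sR P (\<Delta> @ [X]) = H \<union> {{pv, b}, {cv, pv}, {cv, tv}, {tv, a'}, {tv, b'}}"
      unfolding switch_edges_snoc base_eq[OF sR_def] X H_def
      using sub_eq[OF sR_def, of False False A] sub_eq[OF sR_def, of False True B]
        sub_eq[OF sR_def, of True False B'] sub_eq[OF sR_def, of True True A']
      by (auto simp: Let_def sR_def pv_def cv_def tv_def a_def b_def a'_def b'_def EA_def EB_def EB'_def EA'_def n_def)
    have wfH: "wfE VH H"
    proof -
      have "wfE VH (switch_edges s0 P \<Delta>)" using graph_wf by (rule wfE_mono) (auto simp: VH_def base_def)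
      moreover have "wfE VH EA" unfolding EA_def using tedges_wf by (rule wfE_mono) (auto simp: VH_def VA_def)
      moreover have "wfE VH EB" unfolding EB_def using tedges_wf by (rule wfE_mono) (auto simp: VH_def VB_def)
      moreover have "wfE VH EB'" unfolding EB'_def using tedges_wf by (rule wfE_mono) (auto simp: VH_def VB'_def)
      moreover have "wfE VH EA'" unfolding EA'_def using tedges_wf by (rule wfE_mono) (auto simp: VH_def VA'_def)
      ultimately show ?thesis unfolding H_def by (intro wfE_Un)
    qed
    have ds: "cv \<noteq> pv" "cv \<noteq> tv" "pv \<noteq> tv" by (auto simp: cv_def pv_def tv_def)
    have T: "tree (VH \<union> {cv, pv, tv}) (H \<union> {{cv, a}, {cv, tv}, {tv, a'}, {pv, b}, {pv, b'}})"
      by (rule mult_abstract[OF wfH notcpt ds roots rootd])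
        (use trees OV OEL OER in \<open>metis\<close>)+
    have wfT: "wfE (VH \<union> {cv, pv, tv}) (H \<union> {{cv, a}, {cv, tv}, {tv, a'}, {pv, b}, {pv, b'}})"
    proof (rule wfE_Un)
      show "wfE (VH \<union> {cv, pv, tv}) H" using wfH by (rule wfE_mono) auto
      show "wfE (VH \<union> {cv, pv, tv}) {{cv, a}, {cv, tv}, {tv, a'}, {pv, b}, {pv, b'}}"
        by (intro wfE_insert wfE_empty) (use roots in auto)
    qed
    define E where "E = H \<union> {{cv, a}, {cv, tv}, {tv, a'}, {pv, b}, {pv, b'}}"
    define Ec where "Ec = {e \<in> E. \<exists>z. \<phi> ` e = {z}}"
    have vals: "\<phi> cv = VG n []" "\<phi> tv = VG n []" "\<phi> pv = VG (Suc n) []"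
      by (simp_all add: \<phi>_def cv_def tv_def pv_def)
    have ctE: "conn Ec cv tv"
      by (rule conn_edge) (simp add: Ec_def E_def vals)
    have fib: "conn Ec x y" if "x \<in> VH \<union> {cv, pv, tv}" "y \<in> VH \<union> {cv, pv, tv}" "\<phi> x = \<phi> y" for x y
    proof -
      from cls[OF that(1)] cls[OF that(2)] show ?thesis
      proof (elim disjE)
        assume "\<exists>r. x = VG n r" "\<exists>r. y = VG n r"
        then obtain r1 r2 where r: "x = VG n r1" "y = VG n r2" by blast
        then have "mm n r1 = mm n r2" using that(3) by (simp add: \<phi>_def)
        from mm_inj[OF this] show ?thesis
        proof
          assume "r1 = r2" then show ?thesis using r by simp
        next
          assume "r1 \<in> {[], [True]} \<and> r2 \<in> {[], [True]}"
          then have "x \<in> {cv, tv}" "y \<in> {cv, tv}" using r by (auto simp: cv_def tv_def)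
          then show ?thesis using ctE conn_sym[OF ctE] by auto
        qed
      next
        assume "\<exists>r. x = VG n r" "\<phi> y = y \<and> (\<forall>r. y \<noteq> VG n r \<and> y \<noteq> VG (Suc n) r)"
        then obtain r1 where "x = VG n r1" by blast
        then have "\<phi> x = mm n r1" by (simp add: \<phi>_def)
        then show ?thesis using mm_range[of n r1] that(3) \<open>\<phi> y = y \<and> _\<close> by metis
      next
        assume "\<exists>r. y = VG n r" "\<phi> x = x \<and> (\<forall>r. x \<noteq> VG n r \<and> x \<noteq> VG (Suc n) r)"
        then obtain r1 where "y = VG n r1" by blast
        then have "\<phi> y = mm n r1" by (simp add: \<phi>_def)
        then show ?thesis using mm_range[of n r1] that(3) \<open>\<phi> x = x \<and> _\<close> by metis
      next
        assume "\<phi> x = x \<and> (\<forall>r. x \<noteq> VG n r \<and> x \<noteq> VG (Suc n) r)"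
          "\<phi> y = y \<and> (\<forall>r. y \<noteq> VG n r \<and> y \<noteq> VG (Suc n) r)"
        then have "\<phi> x = x" "\<phi> y = y" by simp_all
        then have "x = y" using that(3) by metis
        then show ?thesis by simp
      qed
    qed
    have TC: "tree (\<phi> ` (VH \<union> {cv, pv, tv})) (imgE \<phi> E)"
      by (rule contract[OF T[folded E_def] wfT[folded E_def]]) (use fib in \<open>simp add: Ec_def\<close>)
    have rel: "\<phi> ` tverts (VG n) [x1, x2] T = tverts g [y] T \<and> imgE \<phi> (tedges s0 (VG n) [x1, x2] T) = tedges s' g [y] T
        \<and> \<phi> (troot (VG n) [x1, x2] T) = troot g [y] T"
      if "\<forall>r. \<phi> (VG n (x1 # x2 # r)) = g (y # r)" "goodf g" for x1 x2 y g and T :: "'a ftree"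
      by (rule relabel) (use that in \<open>auto simp: s0_def \<phi>_def\<close>)
    have RA: "\<phi> ` VA = tverts (VG n) [False] A \<and> imgE \<phi> EA = tedges s' (VG n) [False] A \<and> \<phi> a = troot (VG n) [False] A"
      unfolding VA_def EA_def a_def by (rule rel) (auto simp: \<phi>_def goodf_VG)
    have RB: "\<phi> ` VB = tverts (VG (Suc n)) [False] B \<and> imgE \<phi> EB = tedges s' (VG (Suc n)) [False] B \<and> \<phi> b = troot (VG (Suc n)) [False] B"
      unfolding VB_def EB_def b_def by (rule rel) (auto simp: \<phi>_def goodf_VG)
    have RB': "\<phi> ` VB' = tverts (VG (Suc n)) [True] B' \<and> imgE \<phi> EB' = tedges s' (VG (Suc n)) [True] B' \<and> \<phi> b' = troot (VG (Suc n)) [True] B'"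
      unfolding VB'_def EB'_def b'_def by (rule rel) (auto simp: \<phi>_def goodf_VG)
    have RA': "\<phi> ` VA' = tverts (VG n) [True] A' \<and> imgE \<phi> EA' = tedges s' (VG n) [True] A' \<and> \<phi> a' = troot (VG n) [True] A'"
      unfolding VA'_def EA'_def a'_def by (rule rel) (auto simp: \<phi>_def goodf_VG)
    have bid: "\<forall>x\<in>graph_verts P \<Delta>. \<phi> x = x" using base_id base_def by simp
    have bs: "switch_edges s0 P \<Delta> = switch_edges s' P \<Delta>"
      by (rule graph_s_cong) (use bid in \<open>simp add: s0_def\<close>)
    have ne: "VG n [] \<noteq> troot (VG n) [b1] T" "VG (Suc n) [] \<noteq> troot (VG (Suc n)) [b1] T" for b1 and T :: "'a ftree"
      by (cases T; simp)+
    have Gimg: "imgE \<phi> {{cv, a}, {cv, tv}, {tv, a'}, {pv, b}, {pv, b'}} =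
        {{VG n [], troot (VG n) [False] A}, {VG n [], troot (VG n) [True] A'},
         {VG (Suc n) [], troot (VG (Suc n)) [False] B}, {VG (Suc n) [], troot (VG (Suc n)) [True] B'}}"
    proof -
      have n1: "troot (VG n) [False] A \<noteq> VG n []" "troot (VG n) [True] A' \<noteq> VG n []"
        "troot (VG (Suc n)) [False] B \<noteq> VG (Suc n) []" "troot (VG (Suc n)) [True] B' \<noteq> VG (Suc n) []"
        using ne by metis+
      have im: "\<phi> ` {cv, a} = {VG n [], troot (VG n) [False] A}" "\<phi> ` {cv, tv} = {VG n []}"
        "\<phi> ` {tv, a'} = {VG n [], troot (VG n) [True] A'}" "\<phi> ` {pv, b} = {VG (Suc n) [], troot (VG (Suc n)) [False] B}"
        "\<phi> ` {pv, b'} = {VG (Suc n) [], troot (VG (Suc n)) [True] B'}"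
        using RA RB RB' RA' vals by simp_all
      have ps: "(\<exists>z. {x, y} = {z}) \<longleftrightarrow> x = y" for x y :: vtx by auto
      show ?thesis unfolding imgE_insert im using n1 by (simp add: ps)
    qed
    have NE: "switch_edges s' P (\<Delta> @ [Y1, Y2]) = switch_edges s' P \<Delta> \<union>
        {{VG n [], troot (VG n) [False] A}, {VG n [], troot (VG n) [True] A'},
         {VG (Suc n) [], troot (VG (Suc n)) [False] B}, {VG (Suc n) [], troot (VG (Suc n)) [True] B'}}
        \<union> tedges s' (VG n) [False] A \<union> tedges s' (VG n) [True] A'
        \<union> tedges s' (VG (Suc n)) [False] B \<union> tedges s' (VG (Suc n)) [True] B'"
    proof -
      have "switch_edges s' P (\<Delta> @ [Y1, Y2]) = switch_edges s' P ((\<Delta> @ [Y1]) @ [Y2])" by simp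
      also have "\<dots> = switch_edges s' P \<Delta> \<union> tedges s' (VG n) [] Y1 \<union> tedges s' (VG (Suc n)) [] Y2"
        unfolding switch_edges_snoc n_def by simp
      finally show ?thesis unfolding Y1_def Y2_def by (auto simp: Let_def)
    qed
    have NV: "graph_verts P (\<Delta> @ [Y1, Y2]) = graph_verts P \<Delta> \<union> {VG n [], VG (Suc n) []}
        \<union> tverts (VG n) [False] A \<union> tverts (VG n) [True] A'
        \<union> tverts (VG (Suc n)) [False] B \<union> tverts (VG (Suc n)) [True] B'"
    proof -
      have "graph_verts P (\<Delta> @ [Y1, Y2]) = graph_verts P ((\<Delta> @ [Y1]) @ [Y2])" by simp
      also have "\<dots> = graph_verts P \<Delta> \<union> tverts (VG n) [] Y1 \<union> tverts (VG (Suc n)) [] Y2"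
        unfolding graph_verts_snoc n_def by simp
      finally show ?thesis unfolding Y1_def Y2_def by auto
    qed
    have Eimg: "imgE \<phi> E = switch_edges s' P (\<Delta> @ [Y1, Y2])"
      unfolding E_def H_def imgE_Un Gimg NE graph_img_id(1)[OF bid] bs using RA RB RB' RA' by auto
    have Vimg: "\<phi> ` (VH \<union> {cv, pv, tv}) = graph_verts P (\<Delta> @ [Y1, Y2])"
    proof -
      have "\<phi> ` base = base" using base_id by force
      then show ?thesis unfolding VH_def NV image_Un using RA RB RB' RA' vals base_def by auto
    qed
    show ?thesis using TC Eimg Vimg by simp
  qed
  then show ?thesis unfolding correct_tree using ppg2 by (simp add: Y1_def Y2_def)
qed

theorem lemma1p15:
  assumes "correct P \<Gamma>"
      and "cut_red P \<Gamma> P' \<Gamma>'"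
  shows "correct P' \<Gamma>'"
  using assms(2)
proof cases
  case (mult A B B' A' D)
  have c1: "correct P (D @ [Node CutC (Node Par A B) (Node Tens B' A')])"
    by (rule perm_correct[OF assms(1)]) (use mult in simp)
  have c2: "correct P (D @ [Node CutC A A', Node CutC B B'])"
    by (rule mult_case[OF c1 refl])
  have "correct P \<Gamma>'"
    by (rule perm_correct[OF c2]) (use mult in simp)
  then show ?thesis using mult by simp
next
  case (atom C h a i j k)
  have c1: "correct P (\<Gamma>' @ [Node CutC (Leaf i (Pos a)) (Leaf j (Neg a))])"
    by (rule perm_correct[OF assms(1)]) (use atom in simp)
  show ?thesis
    by (rule atom_case[OF c1]) (use atom in simp_all)
next
  case (unit C Q i j)
  have c1: "correct P (\<Gamma>' @ [Node CutC (Leaf i Bot) (Leaf j One)])"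
    by (rule perm_correct[OF assms(1)]) (use unit in simp)
  show ?thesis
    by (rule unit_case[OF c1]) (use unit in simp_all)
qed

end
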